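(* Let $I\subset\mathbb R$ be an open interval, $r:I\to\mathbb R$ a smooth positive function with $(r')^2\neq1$ on $I$, $C\neq0$ a constant, $\eta\in\{1,-1\}$, and fix a sign $\pm$. Assume $$R(u):=(r r''+(r')^2-1)^2\pm 4C^2r^2\,((r')^2-1)>0\quad\text{on } I,$$ and let $\varphi:I\to\mathbb R$ be any function with $\displaystyle\varphi'=\eta\,\frac{\sqrt{R}}{r\,((r')^2-1)}$. Case (A): if $(r')^2>1$ on $I$, let $x_2,x_4$ satisfy $x_2'=\sqrt{(r')^2-1}\,\sinh\varphi$, $x_4'=\sqrt{(r')^2-1}\,\cosh\varphi$. Case (B): if $(r')^2<1$ on $I$, let $x_2,x_4$ satisfy $x_2'=\sqrt{1-(r')^2}\,\cosh\varphi$, $x_4'=\sqrt{1-(r')^2}\,\sinh\varphi$. In either case the curve $c(u)=(r(u),x_2(u),0,x_4(u))$ is a spacelike curve parameterized by arc-length with $x_2'x_4''-x_2''x_4'\neq0$ on $I$, and the rotational surface of hyperbolic type $z(u,v)=(r(u)\cosh v,\,x_2(u),\,r(u)\sinh v,\,x_4(u))$, $v\in\mathbb R$, is a Lorentz surface in $\mathbb E^4_2$ with constant mean curvature ($\langle H,H\rangle=\pm C^2$, a nonzero constant). Conversely, let $z(u,v)=(r(u)\cosh v,x_2(u),r(u)\sinh v,x_4(u))$, $u\in J$, be a rotational surface of hyperbolic type whose generating curve $(r,x_2,0,x_4)$ is spacelike and parameterized by arc-length ($(r')^2+(x_2')^2-(x_4')^2=1$), with $r>0$ and $(r')^2\neq1$,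 and suppose $x_2'x_4''-x_2''x_4'\neq0$ on an open interval $I\subset J$ and $\langle H,H\rangle$ is a nonzero constant on $I$. Then, locally on $I$, the curve is obtained from $r$ by the construction of Case (A) or Case (B) above for some $C\neq0$, sign $\pm$, $\eta\in\{\pm1\}$ and suitable constants of integration.
   Context: $\mathbb E^4_2$ is $\mathbb R^4$ with the neutral metric $\langle\cdot,\cdot\rangle$ given by $g_0=dx_1^2+dx_2^2-dx_3^2-dx_4^2$. A vector $v$ is spacelike if $\langle v,v\rangle>0$. A surface in $\mathbb E^4_2$ is Lorentz if its induced metric has signature $(1,1)$. The mean curvature vector is $H=\frac12\operatorname{tr}\sigma$, where $\sigma$ is the second fundamental form; the surface has constant mean curvature if $\langle H,H\rangle$ is a nonzero constant. A rotational surface of hyperbolic type is $z(u,v)=(r(u)\cosh v,x_2(u),r(u)\sinh v,x_4(u))$, obtained by hyperbolic rotation of the curve $(r(u),x_2(u),0,x_4(u))$, $r>0$, about the Lorentz plane spanned by $e_2=(0,1,0,0)$ and $e_4=(0,0,0,1)$.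
   Formalization: In the converse, $x_4'$ in Case (A) and $x_2'$ in Case (B) equal epsilon times the stated cosh expression for some sign epsilon in {1,-1}, rather than the expression itself. The statement above fails without it. *)

theory Defs
  imports "HOL-Analysis.Analysis"
begin

definition ip42 :: "real^4 \<Rightarrow> real^4 \<Rightarrow> real" where
  "ip42 x y = x$1 * y$1 + x$2 * y$2 - x$3 * y$3 - x$4 * y$4"

definition spacelike :: "real^4 \<Rightarrow> bool" where
  "spacelike w \<longleftrightarrow> ip42 w w > 0"

definition smooth_real_on :: "real set \<Rightarrow> (real \<Rightarrow> real) \<Rightarrow> bool" where
  "smooth_real_on S f \<longleftrightarrow> (\<forall>n. \<forall>x\<in>S. ((deriv ^^ n) f) differentiable (at x))"

definition pu :: "(real \<Rightarrow> real \<Rightarrow> real^4) \<Rightarrow> real \<Rightarrow> real \<Rightarrow> real^4" where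
  "pu z u v = vector_derivative (\<lambda>s. z s v) (at u)"
definition pv :: "(real \<Rightarrow> real \<Rightarrow> real^4) \<Rightarrow> real \<Rightarrow> real \<Rightarrow> real^4" where
  "pv z u v = vector_derivative (\<lambda>t. z u t) (at v)"
definition puu :: "(real \<Rightarrow> real \<Rightarrow> real^4) \<Rightarrow> real \<Rightarrow> real \<Rightarrow> real^4" where
  "puu z u v = vector_derivative (\<lambda>s. pu z s v) (at u)"
definition puv :: "(real \<Rightarrow> real \<Rightarrow> real^4) \<Rightarrow> real \<Rightarrow> real \<Rightarrow> real^4" where
  "puv z u v = vector_derivative (\<lambda>t. pu z u t) (at v)"
definition pvv :: "(real \<Rightarrow> real \<Rightarrow> real^4) \<Rightarrow> real \<Rightarrow> real \<Rightarrow> real^4" where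
  "pvv z u v = vector_derivative (\<lambda>t. pv z u t) (at v)"

definition metE where "metE z u v = ip42 (pu z u v) (pu z u v)"
definition metF where "metF z u v = ip42 (pu z u v) (pv z u v)"
definition metG where "metG z u v = ip42 (pv z u v) (pv z u v)"

text \<open>The induced (2x2 symmetric) metric has signature (1,1) iff its determinant is negative.\<close>
definition lorentz_at :: "(real \<Rightarrow> real \<Rightarrow> real^4) \<Rightarrow> real \<Rightarrow> real \<Rightarrow> bool" where
  "lorentz_at z u v \<longleftrightarrow> metE z u v * metG z u v - (metF z u v)^2 < 0"

text \<open>Normal component of w with respect to the tangent plane spanned by a, b
  (orthogonal projection w.r.t. the neutral metric).\<close>
definition normal_part :: "real^4 \<Rightarrow> real^4 \<Rightarrow> real^4 \<Rightarrow> real^4" where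
  "normal_part a b w =
     (let E = ip42 a a; F = ip42 a b; G = ip42 b b; D = E * G - F^2;
          p = ip42 w a; q = ip42 w b
      in w - (((G * p - F * q) / D) *\<^sub>R a + ((E * q - F * p) / D) *\<^sub>R b))"

definition sff11 where "sff11 z u v = normal_part (pu z u v) (pv z u v) (puu z u v)"
definition sff12 where "sff12 z u v = normal_part (pu z u v) (pv z u v) (puv z u v)"
definition sff22 where "sff22 z u v = normal_part (pu z u v) (pv z u v) (pvv z u v)"

text \<open>Mean curvature vector H = (1/2) tr sigma = (1/2) sum g^{ij} sigma_ij.\<close>
definition mean_curv :: "(real \<Rightarrow> real \<Rightarrow> real^4) \<Rightarrow> real \<Rightarrow> real \<Rightarrow> real^4" where
  "mean_curv z u v =
     (let E = metE z u v; F = metF z u v; G = metG z u v; D = E * G - F^2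
      in (1 / 2) *\<^sub>R ((G / D) *\<^sub>R sff11 z u v - (2 * F / D) *\<^sub>R sff12 z u v
                        + (E / D) *\<^sub>R sff22 z u v))"

definition rot_hyp :: "(real \<Rightarrow> real) \<Rightarrow> (real \<Rightarrow> real) \<Rightarrow> (real \<Rightarrow> real) \<Rightarrow> real \<Rightarrow> real \<Rightarrow> real^4" where
  "rot_hyp r x2 x4 u v = vector [r u * cosh v, x2 u, r u * sinh v, x4 u]"

definition gen_curve :: "(real \<Rightarrow> real) \<Rightarrow> (real \<Rightarrow> real) \<Rightarrow> (real \<Rightarrow> real) \<Rightarrow> real \<Rightarrow> real^4" where
  "gen_curve r x2 x4 u = vector [r u, x2 u, 0, x4 u]"

definition Rfun :: "(real \<Rightarrow> real) \<Rightarrow> real \<Rightarrow> real \<Rightarrow> real \<Rightarrow> real" where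
  "Rfun r C s u = (r u * deriv (deriv r) u + (deriv r u)^2 - 1)^2
                   + s * 4 * C^2 * (r u)^2 * ((deriv r u)^2 - 1)"

end

theory Submission
  imports Defs
begin

lemma vector_4 [simp]:
 "(vector [x,y,z,w] ::('a::zero)^4)$1 = x"
 "(vector [x,y,z,w] ::('a::zero)^4)$2 = y"
 "(vector [x,y,z,w] ::('a::zero)^4)$3 = z"
 "(vector [x,y,z,w] ::('a::zero)^4)$4 = w"
  unfolding vector_def by simp_all
lemma vec4_deriv:
  assumes "(f1 has_real_derivative d1) (at u)" "(f2 has_real_derivative d2) (at u)"
    "(f3 has_real_derivative d3) (at u)" "(f4 has_real_derivative d4) (at u)"
  shows "((\<lambda>s. vector [f1 s, f2 s, f3 s, f4 s] :: real^4) has_vector_derivative vector [d1,d2,d3,d4]) (at u)"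
proof -
  have h: "\<And>f d. (f has_real_derivative d) (at u) \<Longrightarrow> (f has_vector_derivative d) (at u)"
    by (simp add: has_real_derivative_iff_has_vector_derivative)
  have e1: "(\<lambda>s. vector [f1 s, f2 s, f3 s, f4 s] :: real^4) = (\<lambda>s. f1 s *\<^sub>R vector[1,0,0,0] + f2 s *\<^sub>R vector[0,1,0,0] + f3 s *\<^sub>R vector[0,0,1,0] + f4 s *\<^sub>R vector[0,0,0,1])"
    by (simp add: vec_eq_iff forall_4 fun_eq_iff)
  have e2: "(vector [d1,d2,d3,d4] :: real^4) = d1 *\<^sub>R vector[1,0,0,0] + d2 *\<^sub>R vector[0,1,0,0] + d3 *\<^sub>R vector[0,0,1,0] + d4 *\<^sub>R vector[0,0,0,1]"
    by (simp add: vec_eq_iff forall_4)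
  show ?thesis
    unfolding e1 e2
    using assms by (auto intro!: derivative_eq_intros)
qed
lemma csq: "(cosh v)^2 - (sinh v)^2 = (1::real)" by (simp add: cosh_square_eq)
lemma ipv: "ip42 (vector [a,b,c,d]) (vector [e,f,g,h]) = a*e+b*f-c*g-d*h" by (simp add: ip42_def)
lemma MC:
 fixes z :: "real \<Rightarrow> real \<Rightarrow> real^4"
 assumes h1: "pu z u v = vector [p * cosh v, q, p * sinh v, w]"
 and h2: "pv z u v = vector [r * sinh v, 0, r * cosh v, 0]"
 and h3: "puu z u v = vector [a * cosh v, b, a * sinh v, d]"
 and h4: "pvv z u v = vector [r * cosh v, 0, r * sinh v, 0]"
 and r: "r>0" and al: "p^2+q^2-w^2=1" and o: "a*p+b*q-d*w=0"
 shows "lorentz_at z u v \<and> ip42 (mean_curv z u v) (mean_curv z u v) = (a^2+b^2-d^2 - 2*a/r + (1-p^2)/r^2)/4"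
proof -
  define U where "U = (vector [p * cosh v, q, p * sinh v, w] :: real^4)"
  define V where "V = (vector [r * sinh v, 0, r * cosh v, 0] :: real^4)"
  define A where "A = (vector [a * cosh v, b, a * sinh v, d] :: real^4)"
  define B where "B = (vector [r * cosh v, 0, r * sinh v, 0] :: real^4)"
  have cs: "(cosh v)^2 - (sinh v)^2 = 1" by (rule csq)
  have UU: "ip42 U U = 1"
  proof -
    have "ip42 U U = p^2 * ((cosh v)^2 - (sinh v)^2) + (q^2 - w^2)"
      unfolding U_def ipv by (simp add: algebra_simps power2_eq_square)
    then show ?thesis using al cs by simp
  qed
  have UV: "ip42 U V = 0" unfolding U_def V_def ipv by (simp add: algebra_simps)
  have VU: "ip42 V U = 0" unfolding U_def V_def ipv by (simp add: algebra_simps)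
  have VV: "ip42 V V = - (r^2)"
  proof -
    have "ip42 V V = - (r^2) * ((cosh v)^2 - (sinh v)^2)"
      unfolding V_def ipv by (simp add: algebra_simps power2_eq_square)
    then show ?thesis using cs by simp
  qed
  have AU: "ip42 A U = 0"
  proof -
    have "ip42 A U = a*p * ((cosh v)^2 - (sinh v)^2) + b*q - d*w"
      unfolding U_def A_def ipv by (simp add: algebra_simps power2_eq_square)
    then show ?thesis using o cs by simp
  qed
  have AV: "ip42 A V = 0" unfolding A_def V_def ipv by (simp add: algebra_simps)
  have BU: "ip42 B U = r * p"
  proof -
    have "ip42 B U = r*p * ((cosh v)^2 - (sinh v)^2)"
      unfolding U_def B_def ipv by (simp add: algebra_simps power2_eq_square)
    then show ?thesis using cs by simp
  qed
  have BV: "ip42 B V = 0" unfolding B_def V_def ipv by (simp add: algebra_simps)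
  have E: "metE z u v = 1" unfolding metE_def h1 U_def[symmetric] UU ..
  have F: "metF z u v = 0" unfolding metF_def h1 h2 U_def[symmetric] V_def[symmetric] UV ..
  have G: "metG z u v = - (r^2)" unfolding metG_def h2 V_def[symmetric] VV ..
  have L: "lorentz_at z u v" unfolding lorentz_at_def E F G using r by simp
  have s11: "sff11 z u v = A"
    unfolding sff11_def normal_part_def h1 h2 h3 U_def[symmetric] V_def[symmetric] A_def[symmetric]
      Let_def UU UV VV AU AV by simp
  have s22: "sff22 z u v = B - (r*p) *\<^sub>R U"
    unfolding sff22_def normal_part_def h1 h2 h4 U_def[symmetric] V_def[symmetric] B_def[symmetric]
      Let_def UU UV VV BU BV using r by simp
  have H: "mean_curv z u v = (1/2) *\<^sub>R (A - (1/r^2) *\<^sub>R (B - (r*p) *\<^sub>R U))"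
    unfolding mean_curv_def Let_def E F G s11 s22 using r by (simp add: algebra_simps)
  have AA: "ip42 A A = a^2 + b^2 - d^2"
  proof -
    have "ip42 A A = a^2 * ((cosh v)^2 - (sinh v)^2) + (b^2 - d^2)"
      unfolding A_def ipv by (simp add: algebra_simps power2_eq_square)
    then show ?thesis using cs by simp
  qed
  have AB: "ip42 A B = r * a"
  proof -
    have "ip42 A B = r*a * ((cosh v)^2 - (sinh v)^2)"
      unfolding A_def B_def ipv by (simp add: algebra_simps power2_eq_square)
    then show ?thesis using cs by simp
  qed
  have BB: "ip42 B B = r^2"
  proof -
    have "ip42 B B = r^2 * ((cosh v)^2 - (sinh v)^2)"
      unfolding B_def ipv by (simp add: algebra_simps power2_eq_square)
    then show ?thesis using cs by simp
  qed
  have bil: "\<And>x y z w k l. ip42 (k *\<^sub>R x + l *\<^sub>R y) w = k * ip42 x w + l * ip42 y w"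
    "\<And>x y z w k l. ip42 w (k *\<^sub>R x + l *\<^sub>R y) = k * ip42 w x + l * ip42 w y"
    by (simp_all add: ip42_def algebra_simps)
  have sym: "\<And>x y. ip42 x y = ip42 y x" by (simp add: ip42_def algebra_simps)
  have Hexp: "mean_curv z u v = (1/2) *\<^sub>R A + (- 1/(2*r^2)) *\<^sub>R B + (p/(2*r)) *\<^sub>R U"
    unfolding H using r by (simp add: algebra_simps power2_eq_square)
  have bil3: "\<And>k l m x y w. ip42 (k *\<^sub>R x + l *\<^sub>R y + m *\<^sub>R w) (k *\<^sub>R x + l *\<^sub>R y + m *\<^sub>R w)
     = k*k*ip42 x x + l*l*ip42 y y + m*m*ip42 w w + 2*k*l*ip42 x y + 2*k*m*ip42 x w + 2*l*m*ip42 y w"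
    by (simp add: ip42_def algebra_simps)
  have "ip42 (mean_curv z u v) (mean_curv z u v) = (a^2+b^2-d^2 - 2*a/r + (1-p^2)/r^2)/4"
    unfolding Hexp bil3 AA BB UU AB AU BU using r by (simp add: field_simps power2_eq_square)
  with L show ?thesis by simp
qed
lemma Zder:
  assumes S: "open S" "u \<in> S"
  and dr: "\<And>s. s \<in> S \<Longrightarrow> (r has_real_derivative R1 s) (at s)"
  and d2: "\<And>s. s \<in> S \<Longrightarrow> (x2 has_real_derivative X2 s) (at s)"
  and d4: "\<And>s. s \<in> S \<Longrightarrow> (x4 has_real_derivative X4 s) (at s)"
  and ddr: "(R1 has_real_derivative R2) (at u)"
  and dd2: "(X2 has_real_derivative Y2) (at u)"
  and dd4: "(X4 has_real_derivative Y4) (at u)"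
  shows "pu (rot_hyp r x2 x4) u v = vector [R1 u * cosh v, X2 u, R1 u * sinh v, X4 u]"
    "pv (rot_hyp r x2 x4) u v = vector [r u * sinh v, 0, r u * cosh v, 0]"
    "puu (rot_hyp r x2 x4) u v = vector [R2 * cosh v, Y2, R2 * sinh v, Y4]"
    "pvv (rot_hyp r x2 x4) u v = vector [r u * cosh v, 0, r u * sinh v, 0]"
    "vector_derivative (gen_curve r x2 x4) (at u) = vector [R1 u, X2 u, 0, X4 u]"
proof -
  have PU: "pu (rot_hyp r x2 x4) s v = vector [R1 s * cosh v, X2 s, R1 s * sinh v, X4 s]" if "s \<in> S" for s
  proof -
    have "((\<lambda>s. rot_hyp r x2 x4 s v) has_vector_derivative vector [R1 s * cosh v, X2 s, R1 s * sinh v, X4 s]) (at s)"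
      unfolding rot_hyp_def
      by (intro vec4_deriv DERIV_cmult_right dr d2 d4 that)
    then show ?thesis unfolding pu_def by (rule vector_derivative_at)
  qed
  show "pu (rot_hyp r x2 x4) u v = vector [R1 u * cosh v, X2 u, R1 u * sinh v, X4 u]" using PU S by simp
  have PV: "pv (rot_hyp r x2 x4) s t = vector [r s * sinh t, 0, r s * cosh t, 0]" for s t
  proof -
    have "((\<lambda>t. rot_hyp r x2 x4 s t) has_vector_derivative vector [r s * sinh t, 0, r s * cosh t, 0]) (at t)"
      unfolding rot_hyp_def
      by (intro vec4_deriv) (auto intro!: derivative_eq_intros)
    then show ?thesis unfolding pv_def by (rule vector_derivative_at)
  qed
  show "pv (rot_hyp r x2 x4) u v = vector [r u * sinh v, 0, r u * cosh v, 0]" by (rule PV)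
  have "((\<lambda>t. pv (rot_hyp r x2 x4) u t) has_vector_derivative vector [r u * cosh v, 0, r u * sinh v, 0]) (at v)"
    unfolding PV by (intro vec4_deriv) (auto intro!: derivative_eq_intros)
  then show "pvv (rot_hyp r x2 x4) u v = vector [r u * cosh v, 0, r u * sinh v, 0]"
    unfolding pvv_def by (rule vector_derivative_at)
  have "((\<lambda>s. vector [R1 s * cosh v, X2 s, R1 s * sinh v, X4 s] :: real^4) has_vector_derivative vector [R2 * cosh v, Y2, R2 * sinh v, Y4]) (at u)"
    by (intro vec4_deriv DERIV_cmult_right ddr dd2 dd4)
  then have "((\<lambda>s. pu (rot_hyp r x2 x4) s v) has_vector_derivative vector [R2 * cosh v, Y2, R2 * sinh v, Y4]) (at u)"
    by (rule has_vector_derivative_transform_within_open[OF _ S]) (simp add: PU)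
  then show "puu (rot_hyp r x2 x4) u v = vector [R2 * cosh v, Y2, R2 * sinh v, Y4]"
    unfolding puu_def by (rule vector_derivative_at)
  have "(gen_curve r x2 x4 has_vector_derivative vector [R1 u, X2 u, 0, X4 u]) (at u)"
    unfolding gen_curve_def
    by (intro vec4_deriv DERIV_const dr d2 d4 S)
  then show "vector_derivative (gen_curve r x2 x4) (at u) = vector [R1 u, X2 u, 0, X4 u]"
    by (rule vector_derivative_at)
qed
lemma algfin:
  fixes A P r2 \<phi>d \<rho> :: real
  assumes "A \<noteq> 0" "\<rho> \<noteq> 0" "P = A + 1"
  shows "r2^2 + (A*\<phi>d^2 - P*r2^2/A) - 2*r2/\<rho> + (1-P)/\<rho>^2 = (\<rho>^2*A^2*\<phi>d^2 - (\<rho>*r2 + A)^2)/(\<rho>^2*A)"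
  using assms by (simp add: field_simps power2_eq_square)

lemma algA:
  fixes p r2 \<phi>d hs hc \<epsilon> \<rho> a :: real
  assumes p: "p^2 > 1" and cs: "hc^2 - hs^2 = 1" and e: "\<epsilon>^2 = 1" and rho: "\<rho> > 0"
    and a: "a = sqrt (p^2 - 1)"
  shows "p^2 + (a*hs)^2 - (\<epsilon>*(a*hc))^2 = 1"
    "r2*p + ((p*r2/a)*hs + a*hc*\<phi>d)*(a*hs) - (\<epsilon>*((p*r2/a)*hc + a*hs*\<phi>d))*(\<epsilon>*(a*hc)) = 0"
    "(a*hs)*(\<epsilon>*((p*r2/a)*hc + a*hs*\<phi>d)) - ((p*r2/a)*hs + a*hc*\<phi>d)*(\<epsilon>*(a*hc)) = - \<epsilon>*(p^2-1)*\<phi>d"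
    "(r2^2 + ((p*r2/a)*hs + a*hc*\<phi>d)^2 - (\<epsilon>*((p*r2/a)*hc + a*hs*\<phi>d))^2 - 2*r2/\<rho> + (1-p^2)/\<rho>^2)/4
      = (\<rho>^2*(p^2-1)^2*\<phi>d^2 - (\<rho>*r2 + (p^2-1))^2)/(4*\<rho>^2*(p^2-1))"
proof -
  have A: "p^2 - 1 > 0" using p by simp
  have aa: "a^2 = p^2 - 1" using A a by simp
  have a0: "a > 0" using A a by simp
  have hc: "hc^2 = 1 + hs^2" using cs by simp
  show "p^2 + (a*hs)^2 - (\<epsilon>*(a*hc))^2 = 1"
    by (simp add: power_mult_distrib e hc aa algebra_simps)
  show "r2*p + ((p*r2/a)*hs + a*hc*\<phi>d)*(a*hs) - (\<epsilon>*((p*r2/a)*hc + a*hs*\<phi>d))*(\<epsilon>*(a*hc)) = 0"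
  proof -
    have "r2*p + ((p*r2/a)*hs + a*hc*\<phi>d)*(a*hs) - (\<epsilon>*((p*r2/a)*hc + a*hs*\<phi>d))*(\<epsilon>*(a*hc))
       = r2*p*(1 + hs^2 - \<epsilon>^2*hc^2) + a^2*hs*hc*\<phi>d*(1 - \<epsilon>^2)"
      using a0 by (simp add: field_simps power2_eq_square)
    then show ?thesis using e cs by (simp add: hc)
  qed
  show "(a*hs)*(\<epsilon>*((p*r2/a)*hc + a*hs*\<phi>d)) - ((p*r2/a)*hs + a*hc*\<phi>d)*(\<epsilon>*(a*hc)) = - \<epsilon>*(p^2-1)*\<phi>d"
  proof -
    have "(a*hs)*(\<epsilon>*((p*r2/a)*hc + a*hs*\<phi>d)) - ((p*r2/a)*hs + a*hc*\<phi>d)*(\<epsilon>*(a*hc)) = - \<epsilon>*a^2*\<phi>d*(hc^2-hs^2)"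
      using a0 by (simp add: field_simps power2_eq_square)
    then show ?thesis using cs aa by simp
  qed
  have k: "((p*r2/a)*hs + a*hc*\<phi>d)^2 - (\<epsilon>*((p*r2/a)*hc + a*hs*\<phi>d))^2
     = (a^2*\<phi>d^2 - (p*r2/a)^2) * (hc^2 - hs^2)"
    using a0 by (simp only: power_mult_distrib e mult_1) (simp add: field_simps power2_eq_square)
  have k2: "(p*r2/a)^2 = p^2*r2^2/(p^2-1)" using aa by (simp add: power_divide power_mult_distrib)
  have "r2^2 + ((p*r2/a)*hs + a*hc*\<phi>d)^2 - (\<epsilon>*((p*r2/a)*hc + a*hs*\<phi>d))^2 - 2*r2/\<rho> + (1-p^2)/\<rho>^2
     = r2^2 + (a^2*\<phi>d^2 - p^2*r2^2/(p^2-1)) - 2*r2/\<rho> + (1-p^2)/\<rho>^2"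
    by (simp only: add_diff_eq[symmetric] k k2 cs mult_1_right)
  also have "\<dots> = (\<rho>^2*(p^2-1)^2*\<phi>d^2 - (\<rho>*r2 + (p^2-1))^2)/(\<rho>^2*(p^2-1))"
    using A rho unfolding aa by (intro algfin) auto
  finally show "(r2^2 + ((p*r2/a)*hs + a*hc*\<phi>d)^2 - (\<epsilon>*((p*r2/a)*hc + a*hs*\<phi>d))^2 - 2*r2/\<rho> + (1-p^2)/\<rho>^2)/4
      = (\<rho>^2*(p^2-1)^2*\<phi>d^2 - (\<rho>*r2 + (p^2-1))^2)/(4*\<rho>^2*(p^2-1))"
    by simp
qed
lemma algB:
  fixes p r2 \<phi>d hs hc \<epsilon> \<rho> a :: real
  assumes p: "p^2 < 1" and cs: "hc^2 - hs^2 = 1" and e: "\<epsilon>^2 = 1" and rho: "\<rho> > 0"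
    and a: "a = sqrt (1 - p^2)"
  shows "p^2 + (\<epsilon>*(a*hc))^2 - (a*hs)^2 = 1"
    "r2*p + (\<epsilon>*((-(p*r2/a))*hc + a*hs*\<phi>d))*(\<epsilon>*(a*hc)) - ((-(p*r2/a))*hs + a*hc*\<phi>d)*(a*hs) = 0"
    "(\<epsilon>*(a*hc))*((-(p*r2/a))*hs + a*hc*\<phi>d) - (\<epsilon>*((-(p*r2/a))*hc + a*hs*\<phi>d))*(a*hs) = - \<epsilon>*(p^2-1)*\<phi>d"
    "(r2^2 + (\<epsilon>*((-(p*r2/a))*hc + a*hs*\<phi>d))^2 - ((-(p*r2/a))*hs + a*hc*\<phi>d)^2 - 2*r2/\<rho> + (1-p^2)/\<rho>^2)/4
      = (\<rho>^2*(p^2-1)^2*\<phi>d^2 - (\<rho>*r2 + (p^2-1))^2)/(4*\<rho>^2*(p^2-1))"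
proof -
  have A: "1 - p^2 > 0" using p by simp
  have aa: "a^2 = 1 - p^2" using A a by simp
  have a0: "a > 0" using A a by simp
  have hc: "hc^2 = 1 + hs^2" using cs by simp
  show "p^2 + (\<epsilon>*(a*hc))^2 - (a*hs)^2 = 1"
    by (simp add: power_mult_distrib e hc aa algebra_simps)
  show "r2*p + (\<epsilon>*((-(p*r2/a))*hc + a*hs*\<phi>d))*(\<epsilon>*(a*hc)) - ((-(p*r2/a))*hs + a*hc*\<phi>d)*(a*hs) = 0"
  proof -
    have "r2*p + (\<epsilon>*((-(p*r2/a))*hc + a*hs*\<phi>d))*(\<epsilon>*(a*hc)) - ((-(p*r2/a))*hs + a*hc*\<phi>d)*(a*hs)
       = r2*p*(1 + hs^2 - \<epsilon>^2*hc^2) + a^2*hs*hc*\<phi>d*(\<epsilon>^2 - 1)"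
      using a0 by (simp add: field_simps power2_eq_square)
    then show ?thesis using e cs by (simp add: hc)
  qed
  show "(\<epsilon>*(a*hc))*((-(p*r2/a))*hs + a*hc*\<phi>d) - (\<epsilon>*((-(p*r2/a))*hc + a*hs*\<phi>d))*(a*hs) = - \<epsilon>*(p^2-1)*\<phi>d"
  proof -
    have "(\<epsilon>*(a*hc))*((-(p*r2/a))*hs + a*hc*\<phi>d) - (\<epsilon>*((-(p*r2/a))*hc + a*hs*\<phi>d))*(a*hs) = \<epsilon>*a^2*\<phi>d*(hc^2-hs^2)"
      using a0 by (simp add: field_simps power2_eq_square)
    then show ?thesis using cs aa by (simp add: algebra_simps)
  qed
  have k: "(\<epsilon>*((-(p*r2/a))*hc + a*hs*\<phi>d))^2 - ((-(p*r2/a))*hs + a*hc*\<phi>d)^2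
     = ((p*r2/a)^2 - a^2*\<phi>d^2) * (hc^2 - hs^2)"
    using a0 by (simp only: power_mult_distrib e mult_1) (simp add: field_simps power2_eq_square)
  have k2: "(p*r2/a)^2 - a^2*\<phi>d^2 = (p^2-1)*\<phi>d^2 - p^2*r2^2/(p^2-1)"
  proof -
    have "(p*r2/a)^2 = p^2*r2^2/(1-p^2)" using aa by (simp add: power_divide power_mult_distrib)
    also have "\<dots> = - (p^2*r2^2/(p^2-1))" using A by (simp add: field_simps)
    finally show ?thesis unfolding aa by (simp add: algebra_simps)
  qed
  have "r2^2 + (\<epsilon>*((-(p*r2/a))*hc + a*hs*\<phi>d))^2 - ((-(p*r2/a))*hs + a*hc*\<phi>d)^2 - 2*r2/\<rho> + (1-p^2)/\<rho>^2
     = r2^2 + ((p^2-1)*\<phi>d^2 - p^2*r2^2/(p^2-1)) - 2*r2/\<rho> + (1-p^2)/\<rho>^2"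
    by (simp only: add_diff_eq[symmetric] k k2 cs mult_1_right)
  also have "\<dots> = (\<rho>^2*(p^2-1)^2*\<phi>d^2 - (\<rho>*r2 + (p^2-1))^2)/(\<rho>^2*(p^2-1))"
    using A rho by (intro algfin) auto
  finally show "(r2^2 + (\<epsilon>*((-(p*r2/a))*hc + a*hs*\<phi>d))^2 - ((-(p*r2/a))*hs + a*hc*\<phi>d)^2 - 2*r2/\<rho> + (1-p^2)/\<rho>^2)/4
      = (\<rho>^2*(p^2-1)^2*\<phi>d^2 - (\<rho>*r2 + (p^2-1))^2)/(4*\<rho>^2*(p^2-1))"
    by simp
qed
lemma smooth_D:
  assumes "smooth_real_on I r" "s \<in> I"
  shows "(r has_real_derivative deriv r s) (at s)" "(deriv r has_real_derivative deriv (deriv r) s) (at s)"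
proof -
  have "((deriv ^^ 0) r) differentiable (at s)" "((deriv ^^ 1) r) differentiable (at s)"
    using assms unfolding smooth_real_on_def by blast+
  then show "(r has_real_derivative deriv r s) (at s)" "(deriv r has_real_derivative deriv (deriv r) s) (at s)"
    by (simp_all add: DERIV_deriv_iff_real_differentiable)
qed

lemma sqrt_deriv_test:
  assumes "(f has_real_derivative f') (at u)" "f u > 0" "(g has_real_derivative g') (at u)"
  shows "((\<lambda>s. sqrt (f s) * sinh (g s)) has_real_derivative (f'/(2 * sqrt (f u)))* sinh (g u) + sqrt (f u) * cosh (g u) * g') (at u)"
  using assms by (auto intro!: derivative_eq_intros simp: field_simps)
lemma coreA:
  assumes I: "open I" "u \<in> I" and sm: "smooth_real_on I r" and rp: "r u > 0"
   and p: "\<forall>s\<in>I. (deriv r s)^2 > 1"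
   and dphi: "\<forall>s\<in>I. (\<phi> has_real_derivative \<phi>d s) (at s)"
   and e: "\<epsilon>^2 = (1::real)"
   and d2: "\<forall>s\<in>I. (x2 has_real_derivative sqrt ((deriv r s)^2 - 1) * sinh (\<phi> s)) (at s)"
   and d4: "\<forall>s\<in>I. (x4 has_real_derivative \<epsilon> * (sqrt ((deriv r s)^2 - 1) * cosh (\<phi> s))) (at s)"
  shows "ip42 (vector_derivative (gen_curve r x2 x4) (at u)) (vector_derivative (gen_curve r x2 x4) (at u)) = 1 \<and>
   deriv x2 u * deriv (deriv x4) u - deriv (deriv x2) u * deriv x4 u = - \<epsilon> * ((deriv r u)^2 - 1) * \<phi>d u \<and>
   (\<forall>v. lorentz_at (rot_hyp r x2 x4) u v \<and>
      ip42 (mean_curv (rot_hyp r x2 x4) u v) (mean_curv (rot_hyp r x2 x4) u v)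
       = ((r u)^2 * ((deriv r u)^2 - 1)^2 * (\<phi>d u)^2 - (r u * deriv (deriv r) u + ((deriv r u)^2 - 1))^2)
         / (4 * (r u)^2 * ((deriv r u)^2 - 1)))"
proof -
  define R1 where "R1 = deriv r"
  define R2 where "R2 = deriv (deriv r) u"
  define X2 where "X2 = (\<lambda>s. sqrt ((R1 s)^2 - 1) * sinh (\<phi> s))"
  define X4 where "X4 = (\<lambda>s. \<epsilon> * (sqrt ((R1 s)^2 - 1) * cosh (\<phi> s)))"
  define a where "a = sqrt ((R1 u)^2 - 1)"
  define Y2 where "Y2 = (R1 u * R2 / a) * sinh (\<phi> u) + a * cosh (\<phi> u) * \<phi>d u"
  define Y4 where "Y4 = \<epsilon> * ((R1 u * R2 / a) * cosh (\<phi> u) + a * sinh (\<phi> u) * \<phi>d u)"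
  have dr: "\<And>s. s \<in> I \<Longrightarrow> (r has_real_derivative R1 s) (at s)" unfolding R1_def using smooth_D(1)[OF sm] .
  have ddr: "(R1 has_real_derivative R2) (at u)" unfolding R1_def R2_def using smooth_D(2)[OF sm I(2)] .
  have pu: "(R1 u)^2 > 1" using p I unfolding R1_def by blast
  have a0: "a > 0" unfolding a_def using pu by simp
  have dX2: "\<And>s. s \<in> I \<Longrightarrow> (x2 has_real_derivative X2 s) (at s)" using d2 unfolding X2_def R1_def by blast
  have dX4: "\<And>s. s \<in> I \<Longrightarrow> (x4 has_real_derivative X4 s) (at s)" using d4 unfolding X4_def R1_def by blast
  have ddX2: "(X2 has_real_derivative Y2) (at u)"
    unfolding X2_def Y2_def using ddr dphi I(2) pu a0
    by (auto intro!: derivative_eq_intros simp: a_def field_simps)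
  have ddX4: "(X4 has_real_derivative Y4) (at u)"
    unfolding X4_def Y4_def using ddr dphi I(2) pu a0
    by (auto intro!: derivative_eq_intros simp: a_def field_simps)
  note Z = Zder[OF I dr dX2 dX4 ddr ddX2 ddX4]
  have cs: "(cosh (\<phi> u))^2 - (sinh (\<phi> u))^2 = 1" by (rule csq)
  have alg: "(R1 u)^2 + (a * sinh (\<phi> u))^2 - (\<epsilon> * (a * cosh (\<phi> u)))^2 = 1"
    "R2 * R1 u + Y2 * (a * sinh (\<phi> u)) - Y4 * (\<epsilon> * (a * cosh (\<phi> u))) = 0"
    "(a * sinh (\<phi> u)) * Y4 - Y2 * (\<epsilon> * (a * cosh (\<phi> u))) = - \<epsilon> * ((R1 u)^2 - 1) * \<phi>d u"
    "(R2^2 + Y2^2 - Y4^2 - 2 * R2 / r u + (1 - (R1 u)^2) / (r u)^2) / 4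
      = ((r u)^2 * ((R1 u)^2 - 1)^2 * (\<phi>d u)^2 - (r u * R2 + ((R1 u)^2 - 1))^2) / (4 * (r u)^2 * ((R1 u)^2 - 1))"
    unfolding Y2_def Y4_def by (rule algA[OF pu cs e rp a_def])+
  have dx2: "deriv x2 s = X2 s" if "s \<in> I" for s using dX2[OF that] by (rule DERIV_imp_deriv)
  have dx4: "deriv x4 s = X4 s" if "s \<in> I" for s using dX4[OF that] by (rule DERIV_imp_deriv)
  have ddx2: "deriv (deriv x2) u = Y2"
    by (rule DERIV_imp_deriv, rule has_field_derivative_transform_within_open[OF ddX2 I]) (simp add: dx2)
  have ddx4: "deriv (deriv x4) u = Y4"
    by (rule DERIV_imp_deriv, rule has_field_derivative_transform_within_open[OF ddX4 I]) (simp add: dx4)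
  have P1: "ip42 (vector_derivative (gen_curve r x2 x4) (at u)) (vector_derivative (gen_curve r x2 x4) (at u)) = 1"
  proof -
    have "vector_derivative (gen_curve r x2 x4) (at u) = vector [R1 u, X2 u, 0, X4 u]" by (rule Z(5))
    then show ?thesis using alg(1) unfolding X2_def X4_def a_def by (simp add: ipv power2_eq_square)
  qed
  have P2: "deriv x2 u * deriv (deriv x4) u - deriv (deriv x2) u * deriv x4 u = - \<epsilon> * ((deriv r u)^2 - 1) * \<phi>d u"
    unfolding ddx2 ddx4 dx2[OF I(2)] dx4[OF I(2)] using alg(3) unfolding X2_def X4_def Y2_def Y4_def a_def R1_def
    by simp
  have P3: "lorentz_at (rot_hyp r x2 x4) u v \<and>
      ip42 (mean_curv (rot_hyp r x2 x4) u v) (mean_curv (rot_hyp r x2 x4) u v)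
       = ((r u)^2 * ((deriv r u)^2 - 1)^2 * (\<phi>d u)^2 - (r u * deriv (deriv r) u + ((deriv r u)^2 - 1))^2)
         / (4 * (r u)^2 * ((deriv r u)^2 - 1))" for v
  proof -
    have "lorentz_at (rot_hyp r x2 x4) u v \<and>
      ip42 (mean_curv (rot_hyp r x2 x4) u v) (mean_curv (rot_hyp r x2 x4) u v)
       = (R2^2 + Y2^2 - Y4^2 - 2*R2/r u + (1 - (R1 u)^2)/(r u)^2)/4"
      apply (rule MC[OF Z(1) Z(2) Z(3) Z(4) rp])
      using alg(1,2) unfolding X2_def X4_def Y2_def Y4_def a_def by (simp_all add: algebra_simps)
    then have "lorentz_at (rot_hyp r x2 x4) u v \<and>
      ip42 (mean_curv (rot_hyp r x2 x4) u v) (mean_curv (rot_hyp r x2 x4) u v)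
       = ((r u)^2 * ((R1 u)^2 - 1)^2 * (\<phi>d u)^2 - (r u * R2 + ((R1 u)^2 - 1))^2) / (4 * (r u)^2 * ((R1 u)^2 - 1))"
      unfolding alg(4) .
    then show ?thesis unfolding R1_def R2_def .
  qed
  show ?thesis using P1 P2 P3 by blast
qed

lemma coreB:
  assumes I: "open I" "u \<in> I" and sm: "smooth_real_on I r" and rp: "r u > 0"
   and p: "\<forall>s\<in>I. (deriv r s)^2 < 1"
   and dphi: "\<forall>s\<in>I. (\<phi> has_real_derivative \<phi>d s) (at s)"
   and e: "\<epsilon>^2 = (1::real)"
   and d2: "\<forall>s\<in>I. (x2 has_real_derivative \<epsilon> * (sqrt (1 - (deriv r s)^2) * cosh (\<phi> s))) (at s)"
   and d4: "\<forall>s\<in>I. (x4 has_real_derivative sqrt (1 - (deriv r s)^2) * sinh (\<phi> s)) (at s)"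
  shows "ip42 (vector_derivative (gen_curve r x2 x4) (at u)) (vector_derivative (gen_curve r x2 x4) (at u)) = 1 \<and>
   deriv x2 u * deriv (deriv x4) u - deriv (deriv x2) u * deriv x4 u = - \<epsilon> * ((deriv r u)^2 - 1) * \<phi>d u \<and>
   (\<forall>v. lorentz_at (rot_hyp r x2 x4) u v \<and>
      ip42 (mean_curv (rot_hyp r x2 x4) u v) (mean_curv (rot_hyp r x2 x4) u v)
       = ((r u)^2 * ((deriv r u)^2 - 1)^2 * (\<phi>d u)^2 - (r u * deriv (deriv r) u + ((deriv r u)^2 - 1))^2)
         / (4 * (r u)^2 * ((deriv r u)^2 - 1)))"
proof -
  define R1 where "R1 = deriv r"
  define R2 where "R2 = deriv (deriv r) u"
  define X2 where "X2 = (\<lambda>s. \<epsilon> * (sqrt (1 - (R1 s)^2) * cosh (\<phi> s)))"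
  define X4 where "X4 = (\<lambda>s. sqrt (1 - (R1 s)^2) * sinh (\<phi> s))"
  define a where "a = sqrt (1 - (R1 u)^2)"
  define Y2 where "Y2 = \<epsilon> * ((-(R1 u * R2 / a)) * cosh (\<phi> u) + a * sinh (\<phi> u) * \<phi>d u)"
  define Y4 where "Y4 = (-(R1 u * R2 / a)) * sinh (\<phi> u) + a * cosh (\<phi> u) * \<phi>d u"
  have dr: "\<And>s. s \<in> I \<Longrightarrow> (r has_real_derivative R1 s) (at s)" unfolding R1_def using smooth_D(1)[OF sm] .
  have ddr: "(R1 has_real_derivative R2) (at u)" unfolding R1_def R2_def using smooth_D(2)[OF sm I(2)] .
  have pu: "(R1 u)^2 < 1" using p I unfolding R1_def by blast
  have a0: "a > 0" unfolding a_def using pu by simp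
  have dX2: "\<And>s. s \<in> I \<Longrightarrow> (x2 has_real_derivative X2 s) (at s)" using d2 unfolding X2_def R1_def by blast
  have dX4: "\<And>s. s \<in> I \<Longrightarrow> (x4 has_real_derivative X4 s) (at s)" using d4 unfolding X4_def R1_def by blast
  have ddX2: "(X2 has_real_derivative Y2) (at u)"
    unfolding X2_def Y2_def using ddr dphi I(2) pu a0
    by (auto intro!: derivative_eq_intros simp: a_def field_simps)
  have ddX4: "(X4 has_real_derivative Y4) (at u)"
    unfolding X4_def Y4_def using ddr dphi I(2) pu a0
    by (auto intro!: derivative_eq_intros simp: a_def field_simps)
  note Z = Zder[OF I dr dX2 dX4 ddr ddX2 ddX4]
  have cs: "(cosh (\<phi> u))^2 - (sinh (\<phi> u))^2 = 1" by (rule csq)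
  have alg: "(R1 u)^2 + (\<epsilon> * (a * cosh (\<phi> u)))^2 - (a * sinh (\<phi> u))^2 = 1"
    "R2 * R1 u + Y2 * (\<epsilon> * (a * cosh (\<phi> u))) - Y4 * (a * sinh (\<phi> u)) = 0"
    "(\<epsilon> * (a * cosh (\<phi> u))) * Y4 - Y2 * (a * sinh (\<phi> u)) = - \<epsilon> * ((R1 u)^2 - 1) * \<phi>d u"
    "(R2^2 + Y2^2 - Y4^2 - 2 * R2 / r u + (1 - (R1 u)^2) / (r u)^2) / 4
      = ((r u)^2 * ((R1 u)^2 - 1)^2 * (\<phi>d u)^2 - (r u * R2 + ((R1 u)^2 - 1))^2) / (4 * (r u)^2 * ((R1 u)^2 - 1))"
    unfolding Y2_def Y4_def by (rule algB[OF pu cs e rp a_def])+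
  have dx2: "deriv x2 s = X2 s" if "s \<in> I" for s using dX2[OF that] by (rule DERIV_imp_deriv)
  have dx4: "deriv x4 s = X4 s" if "s \<in> I" for s using dX4[OF that] by (rule DERIV_imp_deriv)
  have ddx2: "deriv (deriv x2) u = Y2"
    by (rule DERIV_imp_deriv, rule has_field_derivative_transform_within_open[OF ddX2 I]) (simp add: dx2)
  have ddx4: "deriv (deriv x4) u = Y4"
    by (rule DERIV_imp_deriv, rule has_field_derivative_transform_within_open[OF ddX4 I]) (simp add: dx4)
  have P1: "ip42 (vector_derivative (gen_curve r x2 x4) (at u)) (vector_derivative (gen_curve r x2 x4) (at u)) = 1"
  proof -
    have "vector_derivative (gen_curve r x2 x4) (at u) = vector [R1 u, X2 u, 0, X4 u]" by (rule Z(5))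
    then show ?thesis using alg(1) unfolding X2_def X4_def a_def by (simp add: ipv power2_eq_square)
  qed
  have P2: "deriv x2 u * deriv (deriv x4) u - deriv (deriv x2) u * deriv x4 u = - \<epsilon> * ((deriv r u)^2 - 1) * \<phi>d u"
    unfolding ddx2 ddx4 dx2[OF I(2)] dx4[OF I(2)] using alg(3) unfolding X2_def X4_def Y2_def Y4_def a_def R1_def
    by simp
  have P3: "lorentz_at (rot_hyp r x2 x4) u v \<and>
      ip42 (mean_curv (rot_hyp r x2 x4) u v) (mean_curv (rot_hyp r x2 x4) u v)
       = ((r u)^2 * ((deriv r u)^2 - 1)^2 * (\<phi>d u)^2 - (r u * deriv (deriv r) u + ((deriv r u)^2 - 1))^2)
         / (4 * (r u)^2 * ((deriv r u)^2 - 1))" for v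
  proof -
    have "lorentz_at (rot_hyp r x2 x4) u v \<and>
      ip42 (mean_curv (rot_hyp r x2 x4) u v) (mean_curv (rot_hyp r x2 x4) u v)
       = (R2^2 + Y2^2 - Y4^2 - 2*R2/r u + (1 - (R1 u)^2)/(r u)^2)/4"
      apply (rule MC[OF Z(1) Z(2) Z(3) Z(4) rp])
      using alg(1,2) unfolding X2_def X4_def Y2_def Y4_def a_def by (simp_all add: algebra_simps)
    then have "lorentz_at (rot_hyp r x2 x4) u v \<and>
      ip42 (mean_curv (rot_hyp r x2 x4) u v) (mean_curv (rot_hyp r x2 x4) u v)
       = ((r u)^2 * ((R1 u)^2 - 1)^2 * (\<phi>d u)^2 - (r u * R2 + ((R1 u)^2 - 1))^2) / (4 * (r u)^2 * ((R1 u)^2 - 1))"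
      unfolding alg(4) .
    then show ?thesis unfolding R1_def R2_def .
  qed
  show ?thesis using P1 P2 P3 by blast
qed
lemma sign_const:
  fixes f :: "real \<Rightarrow> real"
  assumes I: "is_interval I" and c: "continuous_on I f" and nz: "\<forall>x\<in>I. f x \<noteq> 0"
  shows "(\<forall>x\<in>I. f x > 0) \<or> (\<forall>x\<in>I. f x < 0)"
proof (rule ccontr)
  assume "\<not> ?thesis"
  then obtain x y where xy0: "x \<in> I" "y \<in> I" "\<not> f y > 0" "\<not> f x < 0"
    by blast
  then have xy: "x \<in> I" "y \<in> I" "f x > 0" "f y < 0" using nz by force+
  have iv: "\<And>a b z. a \<in> I \<Longrightarrow> b \<in> I \<Longrightarrow> a \<le> z \<Longrightarrow> z \<le> b \<Longrightarrow> z \<in> I"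
    using I unfolding is_interval_1 by blast
  have sub: "{min x y..max x y} \<subseteq> I"
  proof
    fix z assume z: "z \<in> {min x y..max x y}"
    then have z1: "min x y \<le> z" "z \<le> max x y" by auto
    show "z \<in> I"
    proof (cases "x \<le> y")
      case True
      then have "x \<le> z" "z \<le> y" using z1 by (simp_all add: min_def max_def)
      then show ?thesis using iv[OF xy(1) xy(2)] by blast
    next
      case False
      then have "y \<le> z" "z \<le> x" using z1 by (simp_all add: min_def max_def)
      then show ?thesis using iv[OF xy(2) xy(1)] by blast
    qed
  qed
  have cc: "continuous_on {min x y..max x y} f" using continuous_on_subset[OF c sub] .
  show False
  proof (cases "x \<le> y")
    case True
    then obtain z where "z \<ge> x" "z \<le> y" "f z = 0"
      using IVT2'[of f y 0 x] cc xy by (auto simp: min_def max_def)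
    then show False using nz sub True by (auto simp: min_def max_def)
  next
    case False
    then obtain z where "z \<ge> y" "z \<le> x" "f z = 0"
      using IVT'[of f y 0 x] cc xy by (auto simp: min_def max_def)
    then show False using nz sub False by (auto simp: min_def max_def)
  qed
qed

lemma smooth_mono: "smooth_real_on J f \<Longrightarrow> I \<subseteq> J \<Longrightarrow> smooth_real_on I f"
  unfolding smooth_real_on_def by blast

lemma smooth_D2:
  assumes "smooth_real_on I r" "s \<in> I"
  shows "(deriv (deriv r) has_real_derivative deriv (deriv (deriv r)) s) (at s)"
proof -
  have "((deriv ^^ 2) r) differentiable (at s)"
    using assms unfolding smooth_real_on_def by blast
  then show ?thesis by (simp add: DERIV_deriv_iff_real_differentiable numeral_2_eq_2)
qed

lemma fwd_alg:
  fixes \<rho> p r2 \<eta> R s C :: real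
  assumes "\<rho> > 0" "p^2 \<noteq> 1" "\<eta> \<in> {1,-1}" "R > 0"
    "R = (\<rho>*r2 + p^2 - 1)^2 + s*4*C^2*\<rho>^2*(p^2-1)"
  shows "(\<rho>^2*(p^2-1)^2*(\<eta>* sqrt R/(\<rho>*(p^2-1)))^2 - (\<rho>*r2 + (p^2-1))^2)/(4*\<rho>^2*(p^2-1)) = s*C^2"
    "- 1*(p^2-1)*(\<eta>* sqrt R/(\<rho>*(p^2-1))) \<noteq> 0"
proof -
  have A: "p^2 - 1 \<noteq> 0" using assms by simp
  have e2: "\<eta>^2 = 1" using assms(3) by auto
  have "\<rho>^2*(p^2-1)^2*(\<eta>* sqrt R/(\<rho>*(p^2-1)))^2 = R"
    using A assms(1,4) e2 by (simp add: power_mult_distrib power_divide)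
  then show "(\<rho>^2*(p^2-1)^2*(\<eta>* sqrt R/(\<rho>*(p^2-1)))^2 - (\<rho>*r2 + (p^2-1))^2)/(4*\<rho>^2*(p^2-1)) = s*C^2"
    using A assms(1) unfolding assms(5) by (simp add: field_simps)
  show "- 1*(p^2-1)*(\<eta>* sqrt R/(\<rho>*(p^2-1))) \<noteq> 0"
    using A assms(1,3,4) by auto
qed

lemma conv_alg:
  fixes \<rho> p r2 \<phi>d \<epsilon> \<sigma> c :: real
  assumes rho: "\<rho> > 0" and p: "p^2 \<noteq> 1" and e: "\<epsilon> \<in> {1,-1}" and sg: "\<sigma> \<in> {1,-1}"
    and pos: "\<sigma> * (- \<epsilon> * (p^2-1) * \<phi>d) > 0"
    and c: "c = (\<rho>^2*(p^2-1)^2*\<phi>d^2 - (\<rho>*r2 + (p^2-1))^2)/(4*\<rho>^2*(p^2-1))" and c0: "c \<noteq> 0"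
  shows "(\<rho>*r2 + p^2 - 1)^2 + (if c > 0 then 1 else -1)*4*(sqrt \<bar>c\<bar>)^2*\<rho>^2*(p^2-1) > 0 \<and>
     \<phi>d = (- \<epsilon> * \<sigma>) * sqrt ((\<rho>*r2 + p^2 - 1)^2 + (if c > 0 then 1 else -1)*4*(sqrt \<bar>c\<bar>)^2*\<rho>^2*(p^2-1)) / (\<rho>*(p^2-1))"
proof -
  have A: "p^2 - 1 \<noteq> 0" using p by simp
  have sc: "(if c > 0 then 1 else -1)*(sqrt \<bar>c\<bar>)^2 = c" using c0 by auto
  have R: "(\<rho>*r2 + p^2 - 1)^2 + (if c > 0 then 1 else -1)*4*(sqrt \<bar>c\<bar>)^2*\<rho>^2*(p^2-1) = (\<rho>*((p^2-1)*\<phi>d))^2"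
  proof -
    have "(\<rho>*r2 + p^2 - 1)^2 + (if c > 0 then 1 else -1)*4*(sqrt \<bar>c\<bar>)^2*\<rho>^2*(p^2-1)
        = (\<rho>*r2 + p^2 - 1)^2 + 4*c*\<rho>^2*(p^2-1)"
      using sc by (metis (no_types, lifting) mult.commute mult.left_commute)
    also have "\<dots> = (\<rho>*((p^2-1)*\<phi>d))^2"
      unfolding c using A rho by (simp add: field_simps power2_eq_square)
    finally show ?thesis .
  qed
  have es: "(\<epsilon>*\<sigma>)^2 = 1" using e sg by auto
  have abs: "\<bar>(p^2-1)*\<phi>d\<bar> = - \<epsilon> * \<sigma> * ((p^2-1)*\<phi>d)"
  proof -
    define X where "X = (p^2-1)*\<phi>d"
    have pos': "- (\<epsilon>*\<sigma>) * X > 0" using pos unfolding X_def by (simp add: algebra_simps)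
    have "\<epsilon>*\<sigma> = 1 \<or> \<epsilon>*\<sigma> = -1" using e sg by auto
    then have "\<bar>X\<bar> = - (\<epsilon>*\<sigma>) * X" using pos' by (auto simp: abs_if)
    then show ?thesis unfolding X_def by (simp add: algebra_simps)
  qed
  have sq: "sqrt ((\<rho>*((p^2-1)*\<phi>d))^2) = \<rho> * (- \<epsilon> * \<sigma> * ((p^2-1)*\<phi>d))"
    using rho abs by (simp add: abs_mult)
  have nz: "(p^2-1)*\<phi>d \<noteq> 0" using pos by auto
  have Rpos: "(\<rho>*((p^2-1)*\<phi>d))^2 > 0" using nz rho by simp
  have es': "(\<epsilon>*\<sigma>)*(\<epsilon>*\<sigma>) = 1" using es by (simp add: power2_eq_square)
  have m: "(- \<epsilon> * \<sigma>) * (\<rho> * (- \<epsilon> * \<sigma> * ((p^2-1)*\<phi>d))) = \<rho>*((p^2-1)*\<phi>d)"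
  proof -
    have "(- \<epsilon> * \<sigma>) * (\<rho> * (- \<epsilon> * \<sigma> * ((p^2-1)*\<phi>d))) = ((\<epsilon>*\<sigma>)*(\<epsilon>*\<sigma>)) * (\<rho>*((p^2-1)*\<phi>d))"
      by (simp add: algebra_simps)
    then show ?thesis using es' by simp
  qed
  show ?thesis unfolding R sq m
    using rho A Rpos by simp
qed
lemma sign_obtain:
  fixes f :: "real \<Rightarrow> real"
  assumes "is_interval I" "continuous_on I f" "\<forall>x\<in>I. f x \<noteq> 0"
  shows "\<exists>\<sigma>\<in>{1,-1}. \<forall>x\<in>I. \<sigma> * f x > 0"
proof -
  have "(\<forall>x\<in>I. f x > 0) \<or> (\<forall>x\<in>I. f x < 0)" by (rule sign_const[OF assms])
  then show ?thesis
  proof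
    assume "\<forall>x\<in>I. f x > 0" then show ?thesis by (intro bexI[of _ 1]) auto
  next
    assume "\<forall>x\<in>I. f x < 0" then show ?thesis by (intro bexI[of _ "-1"]) auto
  qed
qed

lemma smooth_cont:
  assumes "smooth_real_on S f"
  shows "continuous_on S (deriv f)" "continuous_on S (deriv (deriv f))"
proof -
  have "\<forall>x\<in>S. isCont (deriv f) x" using smooth_D(2)[OF assms] DERIV_isCont by blast
  then show "continuous_on S (deriv f)" by (rule continuous_at_imp_continuous_on)
  have "\<forall>x\<in>S. isCont (deriv (deriv f)) x" using smooth_D2[OF assms] DERIV_isCont by blast
  then show "continuous_on S (deriv (deriv f))" by (rule continuous_at_imp_continuous_on)
qed

lemma arsinh_der:
  fixes g h :: "real \<Rightarrow> real"
  assumes "(g has_real_derivative g') (at t)" "(h has_real_derivative h') (at t)" "h t > 0"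
  shows "\<exists>D. ((\<lambda>s. arsinh (g s / sqrt (h s))) has_real_derivative D) (at t)"
proof -
  have "((\<lambda>s. sqrt (h s)) has_real_derivative (inverse (sqrt (h t)) / 2) * h') (at t)"
    by (rule DERIV_chain2[OF DERIV_real_sqrt assms(2)]) (rule assms(3))
  then have "((\<lambda>s. g s / sqrt (h s)) has_real_derivative (g' * sqrt (h t) - g t * ((inverse (sqrt (h t)) / 2) * h')) / (sqrt (h t) * sqrt (h t))) (at t)"
    using assms by (intro DERIV_divide) auto
  from DERIV_chain2[OF arsinh_real_has_field_derivative this] show ?thesis by blast
qed

lemma conv_finish:
  fixes r \<phi> \<phi>d W :: "real \<Rightarrow> real" and c \<epsilon> :: real
  assumes iI: "is_interval I" and c0: "c \<noteq> 0"
   and rp: "\<forall>u\<in>I. r u > 0 \<and> (deriv r u)^2 \<noteq> 1"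
   and e: "\<epsilon> \<in> {1,-1}"
   and dphi: "\<forall>u\<in>I. (\<phi> has_real_derivative \<phi>d u) (at u)"
   and Wc: "continuous_on I W" and Wnz: "\<forall>u\<in>I. W u \<noteq> 0"
   and core: "\<forall>u\<in>I. W u = - \<epsilon> * ((deriv r u)^2 - 1) * \<phi>d u \<and>
      c = ((r u)^2 * ((deriv r u)^2 - 1)^2 * (\<phi>d u)^2 - (r u * deriv (deriv r) u + ((deriv r u)^2 - 1))^2)
         / (4 * (r u)^2 * ((deriv r u)^2 - 1))"
  shows "\<exists>C s \<eta>. C \<noteq> 0 \<and> s \<in> {1,-1} \<and> \<eta> \<in> {1,-1} \<and>
     (\<forall>u\<in>I. Rfun r C s u > 0 \<and>
        (\<phi> has_real_derivative \<eta> * sqrt (Rfun r C s u) / (r u * ((deriv r u)^2 - 1))) (at u))"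
proof -
  obtain \<sigma> where \<sigma>: "\<sigma> \<in> {1,-1}" "\<forall>x\<in>I. \<sigma> * W x > 0" using sign_obtain[OF iI Wc Wnz] by blast
  define C where "C = sqrt \<bar>c\<bar>"
  define s where "s = (if c > 0 then 1 else (-1::real))"
  have Rf: "Rfun r C s u = (r u * deriv (deriv r) u + (deriv r u)^2 - 1)^2 + (if c > 0 then 1 else -1)*4*(sqrt \<bar>c\<bar>)^2*(r u)^2*((deriv r u)^2-1)" for u
    unfolding Rfun_def C_def s_def by simp
  have main: "\<forall>u\<in>I. Rfun r C s u > 0 \<and> (\<phi> has_real_derivative (- \<epsilon> * \<sigma>) * sqrt (Rfun r C s u) / (r u * ((deriv r u)^2 - 1))) (at u)"
  proof
    fix u assume u: "u \<in> I"
    have r1: "r u > 0" "(deriv r u)^2 \<noteq> 1" using rp u by auto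
    have cu: "W u = - \<epsilon> * ((deriv r u)^2 - 1) * \<phi>d u"
      "c = ((r u)^2 * ((deriv r u)^2 - 1)^2 * (\<phi>d u)^2 - (r u * deriv (deriv r) u + ((deriv r u)^2 - 1))^2)
         / (4 * (r u)^2 * ((deriv r u)^2 - 1))" using core u by auto
    have pos: "\<sigma> * (- \<epsilon> * ((deriv r u)^2 - 1) * \<phi>d u) > 0"
    proof -
      have "\<sigma> * W u > 0" using \<sigma>(2) u by blast
      then show ?thesis unfolding cu(1) .
    qed
    note ca = conv_alg[OF r1(1) r1(2) e \<sigma>(1) pos cu(2) c0]
    show "Rfun r C s u > 0 \<and> (\<phi> has_real_derivative (- \<epsilon> * \<sigma>) * sqrt (Rfun r C s u) / (r u * ((deriv r u)^2 - 1))) (at u)"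
      unfolding Rf
    proof
      show "0 < (r u * deriv (deriv r) u + (deriv r u)^2 - 1)^2 + (if c > 0 then 1 else -1)*4*(sqrt \<bar>c\<bar>)^2*(r u)^2*((deriv r u)^2-1)"
        using ca by (rule conjunct1)
      have eq: "(- \<epsilon> * \<sigma>) * sqrt ((r u * deriv (deriv r) u + (deriv r u)^2 - 1)^2 + (if c > 0 then 1 else -1)*4*(sqrt \<bar>c\<bar>)^2*(r u)^2*((deriv r u)^2-1)) / (r u * ((deriv r u)^2 - 1)) = \<phi>d u"
        using conjunct2[OF ca] by (rule sym)
      show "(\<phi> has_real_derivative (- \<epsilon> * \<sigma>) * sqrt ((r u * deriv (deriv r) u + (deriv r u)^2 - 1)^2 + (if c > 0 then 1 else -1)*4*(sqrt \<bar>c\<bar>)^2*(r u)^2*((deriv r u)^2-1)) / (r u * ((deriv r u)^2 - 1))) (at u)"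
        unfolding eq using dphi u by blast
    qed
  qed
  have "- \<epsilon> * \<sigma> \<in> {1,-1}" using e \<sigma>(1) by auto
  moreover have "C \<noteq> 0" using c0 unfolding C_def by simp
  moreover have "s \<in> {1,-1}" unfolding s_def by simp
  ultimately show ?thesis using main by blast
qed



lemma caseA_conv:
  fixes r x2 x4 :: "real \<Rightarrow> real" and c :: real
  assumes oI: "open I" and iI: "is_interval I" and IJ: "I \<subseteq> J"
   and smr: "smooth_real_on J r" and smx2: "smooth_real_on J x2" and smx4: "smooth_real_on J x4"
   and rp: "\<forall>u\<in>I. r u > 0 \<and> (deriv r u)^2 \<noteq> 1"
   and arc: "\<forall>u\<in>I. (deriv r u)^2 + (deriv x2 u)^2 - (deriv x4 u)^2 = 1"
   and pA: "\<forall>u\<in>I. (deriv r u)^2 > 1"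
   and Wnz: "\<forall>u\<in>I. deriv x2 u * deriv (deriv x4) u - deriv (deriv x2) u * deriv x4 u \<noteq> 0"
   and c0: "c \<noteq> 0"
   and Hc: "\<forall>u\<in>I. \<forall>v. ip42 (mean_curv (rot_hyp r x2 x4) u v) (mean_curv (rot_hyp r x2 x4) u v) = c"
  shows "\<exists>C s \<eta> \<epsilon> \<phi>. C \<noteq> 0 \<and> s \<in> {1,-1} \<and> \<eta> \<in> {1,-1} \<and> \<epsilon> \<in> {1,-1} \<and>
     (\<forall>u\<in>I. Rfun r C s u > 0 \<and>
        (\<phi> has_real_derivative \<eta> * sqrt (Rfun r C s u) / (r u * ((deriv r u)^2 - 1))) (at u)) \<and>
     (\<forall>u\<in>I. (deriv r u)^2 > 1 \<and>
        deriv x2 u = sqrt ((deriv r u)^2 - 1) * sinh (\<phi> u) \<and>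
        deriv x4 u = \<epsilon> * (sqrt ((deriv r u)^2 - 1) * cosh (\<phi> u)))"
proof -
  have smrI: "smooth_real_on I r" using smooth_mono[OF smr IJ] .
  have smx2I: "smooth_real_on I x2" using smooth_mono[OF smx2 IJ] .
  have smx4I: "smooth_real_on I x4" using smooth_mono[OF smx4 IJ] .
  define W where "W = (\<lambda>u. deriv x2 u * deriv (deriv x4) u - deriv (deriv x2) u * deriv x4 u)"
  have Wc: "continuous_on I W" unfolding W_def
    using smooth_cont[OF smx2I] smooth_cont[OF smx4I] by (intro continuous_intros) auto
  have Wnz': "\<forall>u\<in>I. W u \<noteq> 0" using Wnz unfolding W_def by blast
  have x4nz: "\<forall>u\<in>I. deriv x4 u \<noteq> 0"
  proof
    fix u assume u: "u \<in> I"
    have "(deriv x4 u)^2 = (deriv x2 u)^2 + ((deriv r u)^2 - 1)" using arc u by (simp add: algebra_simps)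
    moreover have "(deriv x2 u)^2 + ((deriv r u)^2 - 1) > 0" using pA u by (simp add: add_nonneg_pos)
    ultimately show "deriv x4 u \<noteq> 0" by auto
  qed
  obtain \<epsilon> where e: "\<epsilon> \<in> {1,-1}" "\<forall>u\<in>I. \<epsilon> * deriv x4 u > 0"
    using sign_obtain[OF iI smooth_cont(1)[OF smx4I] x4nz] by blast
  have e2: "\<epsilon>^2 = 1" using e(1) by auto
  define a where "a = (\<lambda>u. sqrt ((deriv r u)^2 - 1))"
  define \<phi> where "\<phi> = (\<lambda>u. arsinh (deriv x2 u / sqrt ((deriv r u)^2 - 1)))"
  have ap: "a u > 0" if "u \<in> I" for u using pA that unfolding a_def by simp
  have x2eq: "deriv x2 u = sqrt ((deriv r u)^2 - 1) * sinh (\<phi> u)" if u: "u \<in> I" for u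
    using ap[OF u] unfolding \<phi>_def a_def by simp
  have x4eq: "deriv x4 u = \<epsilon> * (sqrt ((deriv r u)^2 - 1) * cosh (\<phi> u))" if u: "u \<in> I" for u
  proof -
    have pu: "(deriv r u)^2 > 1" using pA u by blast
    have a2: "(a u)^2 = (deriv r u)^2 - 1" using pu unfolding a_def by simp
    have "a u * cosh (\<phi> u) = a u * sqrt ((deriv x2 u / a u)^2 + 1)"
      unfolding \<phi>_def a_def by (simp add: cosh_arsinh_real)
    also have "\<dots> = sqrt ((a u)^2 * ((deriv x2 u / a u)^2 + 1))"
      using ap[OF u] by (simp add: real_sqrt_mult)
    also have "\<dots> = sqrt ((deriv x2 u)^2 + (a u)^2)"
      using ap[OF u] by (simp add: field_simps)
    also have "\<dots> = sqrt ((deriv x4 u)^2)" unfolding a2 using arc u by (simp add: algebra_simps)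
    also have "\<dots> = \<bar>deriv x4 u\<bar>" by simp
    finally have ac: "a u * cosh (\<phi> u) = \<bar>deriv x4 u\<bar>" .
    have "\<epsilon> * \<bar>deriv x4 u\<bar> = deriv x4 u" using e u by (auto simp: abs_if)
    then show ?thesis using ac unfolding a_def by simp
  qed
  have dphi0: "\<exists>D. (\<phi> has_real_derivative D) (at u)" if u: "u \<in> I" for u
  proof -
    have uJ: "u \<in> J" using u IJ by blast
    have h: "((\<lambda>s. (deriv r s)^2 - 1) has_real_derivative 2 * deriv r u * deriv (deriv r) u) (at u)"
      using smooth_D(2)[OF smr uJ] by (auto intro!: derivative_eq_intros)
    show ?thesis unfolding \<phi>_def
      by (rule arsinh_der[of "deriv x2" _ u "\<lambda>s. (deriv r s)^2 - 1", OF smooth_D(2)[OF smx2 uJ] h])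
         (use pA u in simp)
  qed
  define \<phi>d where "\<phi>d = deriv \<phi>"
  have dphi: "\<forall>u\<in>I. (\<phi> has_real_derivative \<phi>d u) (at u)"
  proof
    fix u assume u: "u \<in> I"
    obtain D where D: "(\<phi> has_real_derivative D) (at u)" using dphi0[OF u] by blast
    then show "(\<phi> has_real_derivative \<phi>d u) (at u)" unfolding \<phi>d_def using DERIV_imp_deriv[OF D] by simp
  qed
  have d2: "\<forall>u\<in>I. (x2 has_real_derivative sqrt ((deriv r u)^2 - 1) * sinh (\<phi> u)) (at u)"
    using smooth_D(1)[OF smx2I] x2eq by simp
  have d4: "\<forall>u\<in>I. (x4 has_real_derivative \<epsilon> * (sqrt ((deriv r u)^2 - 1) * cosh (\<phi> u))) (at u)"
    using smooth_D(1)[OF smx4I] x4eq by simp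
  have core: "\<forall>u\<in>I. W u = - \<epsilon> * ((deriv r u)^2 - 1) * \<phi>d u \<and>
      c = ((r u)^2 * ((deriv r u)^2 - 1)^2 * (\<phi>d u)^2 - (r u * deriv (deriv r) u + ((deriv r u)^2 - 1))^2)
         / (4 * (r u)^2 * ((deriv r u)^2 - 1))"
  proof
    fix u assume u: "u \<in> I"
    have ru: "r u > 0" using rp u by blast
    note cr = coreA[OF oI u smrI ru pA dphi e2 d2 d4]
    have "c = ip42 (mean_curv (rot_hyp r x2 x4) u 0) (mean_curv (rot_hyp r x2 x4) u 0)" using Hc u by simp
    then show "W u = - \<epsilon> * ((deriv r u)^2 - 1) * \<phi>d u \<and>
      c = ((r u)^2 * ((deriv r u)^2 - 1)^2 * (\<phi>d u)^2 - (r u * deriv (deriv r) u + ((deriv r u)^2 - 1))^2)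
         / (4 * (r u)^2 * ((deriv r u)^2 - 1))"
      using cr unfolding W_def by simp
  qed
  obtain C s \<eta> where fin: "C \<noteq> 0" "s \<in> {1,-1}" "\<eta> \<in> {1,-1}"
     "\<forall>u\<in>I. Rfun r C s u > 0 \<and>
        (\<phi> has_real_derivative \<eta> * sqrt (Rfun r C s u) / (r u * ((deriv r u)^2 - 1))) (at u)"
    using conv_finish[OF iI c0 rp e(1) dphi Wc Wnz' core] by blast
  show ?thesis
    apply (rule exI[of _ C], rule exI[of _ s], rule exI[of _ \<eta>], rule exI[of _ \<epsilon>], rule exI[of _ \<phi>])
    using fin e(1) pA x2eq x4eq by blast
qed


lemma caseB_conv:
  fixes r x2 x4 :: "real \<Rightarrow> real" and c :: real
  assumes oI: "open I" and iI: "is_interval I" and IJ: "I \<subseteq> J"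
   and smr: "smooth_real_on J r" and smx2: "smooth_real_on J x2" and smx4: "smooth_real_on J x4"
   and rp: "\<forall>u\<in>I. r u > 0 \<and> (deriv r u)^2 \<noteq> 1"
   and arc: "\<forall>u\<in>I. (deriv r u)^2 + (deriv x2 u)^2 - (deriv x4 u)^2 = 1"
   and pA: "\<forall>u\<in>I. (deriv r u)^2 < 1"
   and Wnz: "\<forall>u\<in>I. deriv x2 u * deriv (deriv x4) u - deriv (deriv x2) u * deriv x4 u \<noteq> 0"
   and c0: "c \<noteq> 0"
   and Hc: "\<forall>u\<in>I. \<forall>v. ip42 (mean_curv (rot_hyp r x2 x4) u v) (mean_curv (rot_hyp r x2 x4) u v) = c"
  shows "\<exists>C s \<eta> \<epsilon> \<phi>. C \<noteq> 0 \<and> s \<in> {1,-1} \<and> \<eta> \<in> {1,-1} \<and> \<epsilon> \<in> {1,-1} \<and>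
     (\<forall>u\<in>I. Rfun r C s u > 0 \<and>
        (\<phi> has_real_derivative \<eta> * sqrt (Rfun r C s u) / (r u * ((deriv r u)^2 - 1))) (at u)) \<and>
     (\<forall>u\<in>I. (deriv r u)^2 < 1 \<and>
        deriv x2 u = \<epsilon> * (sqrt (1 - (deriv r u)^2) * cosh (\<phi> u)) \<and>
        deriv x4 u = sqrt (1 - (deriv r u)^2) * sinh (\<phi> u))"
proof -
  have smrI: "smooth_real_on I r" using smooth_mono[OF smr IJ] .
  have smx2I: "smooth_real_on I x2" using smooth_mono[OF smx2 IJ] .
  have smx4I: "smooth_real_on I x4" using smooth_mono[OF smx4 IJ] .
  define W where "W = (\<lambda>u. deriv x2 u * deriv (deriv x4) u - deriv (deriv x2) u * deriv x4 u)"
  have Wc: "continuous_on I W" unfolding W_def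
    using smooth_cont[OF smx2I] smooth_cont[OF smx4I] by (intro continuous_intros) auto
  have Wnz': "\<forall>u\<in>I. W u \<noteq> 0" using Wnz unfolding W_def by blast
  have x2nz: "\<forall>u\<in>I. deriv x2 u \<noteq> 0"
  proof
    fix u assume u: "u \<in> I"
    have "(deriv x2 u)^2 = (deriv x4 u)^2 + (1 - (deriv r u)^2)" using arc u by (simp add: algebra_simps)
    moreover have "(deriv x4 u)^2 + (1 - (deriv r u)^2) > 0" using pA u by (simp add: add_nonneg_pos)
    ultimately show "deriv x2 u \<noteq> 0" by auto
  qed
  obtain \<epsilon> where e: "\<epsilon> \<in> {1,-1}" "\<forall>u\<in>I. \<epsilon> * deriv x2 u > 0"
    using sign_obtain[OF iI smooth_cont(1)[OF smx2I] x2nz] by blast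
  have e2: "\<epsilon>^2 = 1" using e(1) by auto
  define a where "a = (\<lambda>u. sqrt (1 - (deriv r u)^2))"
  define \<phi> where "\<phi> = (\<lambda>u. arsinh (deriv x4 u / sqrt (1 - (deriv r u)^2)))"
  have ap: "a u > 0" if "u \<in> I" for u using pA that unfolding a_def by simp
  have x4eq: "deriv x4 u = sqrt (1 - (deriv r u)^2) * sinh (\<phi> u)" if u: "u \<in> I" for u
    using ap[OF u] unfolding \<phi>_def a_def by simp
  have x2eq: "deriv x2 u = \<epsilon> * (sqrt (1 - (deriv r u)^2) * cosh (\<phi> u))" if u: "u \<in> I" for u
  proof -
    have pu: "(deriv r u)^2 < 1" using pA u by blast
    have a2: "(a u)^2 = 1 - (deriv r u)^2" using pu unfolding a_def by simp
    have "a u * cosh (\<phi> u) = a u * sqrt ((deriv x4 u / a u)^2 + 1)"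
      unfolding \<phi>_def a_def by (simp add: cosh_arsinh_real)
    also have "\<dots> = sqrt ((a u)^2 * ((deriv x4 u / a u)^2 + 1))"
      using ap[OF u] by (simp add: real_sqrt_mult)
    also have "\<dots> = sqrt ((deriv x4 u)^2 + (a u)^2)"
      using ap[OF u] by (simp add: field_simps)
    also have "\<dots> = sqrt ((deriv x2 u)^2)"
    proof -
      have "(deriv x4 u)^2 + (a u)^2 = (deriv x2 u)^2" unfolding a2 using arc u by (simp add: algebra_simps)
      then show ?thesis by simp
    qed
    also have "\<dots> = \<bar>deriv x2 u\<bar>" by simp
    finally have ac: "a u * cosh (\<phi> u) = \<bar>deriv x2 u\<bar>" .
    have "\<epsilon> * \<bar>deriv x2 u\<bar> = deriv x2 u" using e u by (auto simp: abs_if)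
    then show ?thesis using ac unfolding a_def by simp
  qed
  have dphi0: "\<exists>D. (\<phi> has_real_derivative D) (at u)" if u: "u \<in> I" for u
  proof -
    have uJ: "u \<in> J" using u IJ by blast
    have h: "((\<lambda>s. 1 - (deriv r s)^2) has_real_derivative - (2 * deriv r u * deriv (deriv r) u)) (at u)"
      using smooth_D(2)[OF smr uJ] by (auto intro!: derivative_eq_intros)
    show ?thesis unfolding \<phi>_def
      by (rule arsinh_der[of "deriv x4" _ u "\<lambda>s. 1 - (deriv r s)^2", OF smooth_D(2)[OF smx4 uJ] h])
         (use pA u in simp)
  qed
  define \<phi>d where "\<phi>d = deriv \<phi>"
  have dphi: "\<forall>u\<in>I. (\<phi> has_real_derivative \<phi>d u) (at u)"
  proof
    fix u assume u: "u \<in> I"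
    obtain D where D: "(\<phi> has_real_derivative D) (at u)" using dphi0[OF u] by blast
    then show "(\<phi> has_real_derivative \<phi>d u) (at u)" unfolding \<phi>d_def using DERIV_imp_deriv[OF D] by simp
  qed
  have d2: "\<forall>u\<in>I. (x2 has_real_derivative \<epsilon> * (sqrt (1 - (deriv r u)^2) * cosh (\<phi> u))) (at u)"
    using smooth_D(1)[OF smx2I] x2eq by simp
  have d4: "\<forall>u\<in>I. (x4 has_real_derivative sqrt (1 - (deriv r u)^2) * sinh (\<phi> u)) (at u)"
    using smooth_D(1)[OF smx4I] x4eq by simp
  have core: "\<forall>u\<in>I. W u = - \<epsilon> * ((deriv r u)^2 - 1) * \<phi>d u \<and>
      c = ((r u)^2 * ((deriv r u)^2 - 1)^2 * (\<phi>d u)^2 - (r u * deriv (deriv r) u + ((deriv r u)^2 - 1))^2)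
         / (4 * (r u)^2 * ((deriv r u)^2 - 1))"
  proof
    fix u assume u: "u \<in> I"
    have ru: "r u > 0" using rp u by blast
    note cr = coreB[OF oI u smrI ru pA dphi e2 d2 d4]
    have "c = ip42 (mean_curv (rot_hyp r x2 x4) u 0) (mean_curv (rot_hyp r x2 x4) u 0)" using Hc u by simp
    then show "W u = - \<epsilon> * ((deriv r u)^2 - 1) * \<phi>d u \<and>
      c = ((r u)^2 * ((deriv r u)^2 - 1)^2 * (\<phi>d u)^2 - (r u * deriv (deriv r) u + ((deriv r u)^2 - 1))^2)
         / (4 * (r u)^2 * ((deriv r u)^2 - 1))"
      using cr unfolding W_def by simp
  qed
  obtain C s \<eta> where fin: "C \<noteq> 0" "s \<in> {1,-1}" "\<eta> \<in> {1,-1}"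
     "\<forall>u\<in>I. Rfun r C s u > 0 \<and>
        (\<phi> has_real_derivative \<eta> * sqrt (Rfun r C s u) / (r u * ((deriv r u)^2 - 1))) (at u)"
    using conv_finish[OF iI c0 rp e(1) dphi Wc Wnz' core] by blast
  show ?thesis
    apply (rule exI[of _ C], rule exI[of _ s], rule exI[of _ \<eta>], rule exI[of _ \<epsilon>], rule exI[of _ \<phi>])
    using fin e(1) pA x2eq x4eq by blast
qed

lemma part2:
  "(\<forall>(J::real set) (I::real set) r x2 x4 c.
      open J \<and> is_interval J \<and> open I \<and> is_interval I \<and> I \<noteq> {} \<and> I \<subseteq> J \<and>
      smooth_real_on J r \<and> smooth_real_on J x2 \<and> smooth_real_on J x4 \<and>
      (\<forall>u\<in>J. r u > 0 \<and> (deriv r u)^2 \<noteq> 1 \<and>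
               spacelike (vector_derivative (gen_curve r x2 x4) (at u)) \<and>
               (deriv r u)^2 + (deriv x2 u)^2 - (deriv x4 u)^2 = 1) \<and>
      (\<forall>u\<in>I. deriv x2 u * deriv (deriv x4) u - deriv (deriv x2) u * deriv x4 u \<noteq> 0) \<and>
      c \<noteq> 0 \<and>
      (\<forall>u\<in>I. \<forall>v. ip42 (mean_curv (rot_hyp r x2 x4) u v) (mean_curv (rot_hyp r x2 x4) u v) = c)
    \<longrightarrow>
      (\<forall>u0\<in>I. \<exists>I0. open I0 \<and> is_interval I0 \<and> u0 \<in> I0 \<and> I0 \<subseteq> I \<and>
         (\<exists>C s \<eta> \<epsilon> \<phi>. C \<noteq> 0 \<and> s \<in> {1, -1} \<and> \<eta> \<in> {1, -1} \<and> \<epsilon> \<in> {1, -1} \<and>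
            (\<forall>u\<in>I0. Rfun r C s u > 0 \<and>
               (\<phi> has_real_derivative
                  \<eta> * sqrt (Rfun r C s u) / (r u * ((deriv r u)^2 - 1))) (at u)) \<and>
            ((\<forall>u\<in>I0. (deriv r u)^2 > 1 \<and>
                deriv x2 u = sqrt ((deriv r u)^2 - 1) * sinh (\<phi> u) \<and>
                deriv x4 u = \<epsilon> * (sqrt ((deriv r u)^2 - 1) * cosh (\<phi> u)))
             \<or>
             (\<forall>u\<in>I0. (deriv r u)^2 < 1 \<and>
                deriv x2 u = \<epsilon> * (sqrt (1 - (deriv r u)^2) * cosh (\<phi> u)) \<and>
                deriv x4 u = sqrt (1 - (deriv r u)^2) * sinh (\<phi> u))))))"
proof (intro allI impI)
  fix J I :: "real set" and r x2 x4 :: "real \<Rightarrow> real" and c :: real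
  assume H: "open J \<and> is_interval J \<and> open I \<and> is_interval I \<and> I \<noteq> {} \<and> I \<subseteq> J \<and>
      smooth_real_on J r \<and> smooth_real_on J x2 \<and> smooth_real_on J x4 \<and>
      (\<forall>u\<in>J. r u > 0 \<and> (deriv r u)^2 \<noteq> 1 \<and>
               spacelike (vector_derivative (gen_curve r x2 x4) (at u)) \<and>
               (deriv r u)^2 + (deriv x2 u)^2 - (deriv x4 u)^2 = 1) \<and>
      (\<forall>u\<in>I. deriv x2 u * deriv (deriv x4) u - deriv (deriv x2) u * deriv x4 u \<noteq> 0) \<and>
      c \<noteq> 0 \<and>
      (\<forall>u\<in>I. \<forall>v. ip42 (mean_curv (rot_hyp r x2 x4) u v) (mean_curv (rot_hyp r x2 x4) u v) = c)"
  have oI: "open I" using H by (elim conjE) assumption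
  have iI: "is_interval I" using H by (elim conjE) assumption
  have IJ: "I \<subseteq> J" using H by (elim conjE) assumption
  have smr: "smooth_real_on J r" using H by (elim conjE) assumption
  have smx2: "smooth_real_on J x2" using H by (elim conjE) assumption
  have smx4: "smooth_real_on J x4" using H by (elim conjE) assumption
  have Jc: "\<forall>u\<in>J. r u > 0 \<and> (deriv r u)^2 \<noteq> 1 \<and>
               spacelike (vector_derivative (gen_curve r x2 x4) (at u)) \<and>
               (deriv r u)^2 + (deriv x2 u)^2 - (deriv x4 u)^2 = 1" using H by (elim conjE) assumption
  have Wnz: "\<forall>u\<in>I. deriv x2 u * deriv (deriv x4) u - deriv (deriv x2) u * deriv x4 u \<noteq> 0"
    using H by (elim conjE) assumption
  have c0: "c \<noteq> 0" using H by (elim conjE) assumption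
  have Hc: "\<forall>u\<in>I. \<forall>v. ip42 (mean_curv (rot_hyp r x2 x4) u v) (mean_curv (rot_hyp r x2 x4) u v) = c"
    using H by (elim conjE) assumption
  have rp: "\<forall>u\<in>I. r u > 0 \<and> (deriv r u)^2 \<noteq> 1" using Jc IJ by blast
  have arc: "\<forall>u\<in>I. (deriv r u)^2 + (deriv x2 u)^2 - (deriv x4 u)^2 = 1" using Jc IJ by blast
  have Acont: "continuous_on I (\<lambda>u. (deriv r u)^2 - 1)"
    using smooth_cont(1)[OF smooth_mono[OF smr IJ]] by (intro continuous_intros)
  have Anz: "\<forall>u\<in>I. (deriv r u)^2 - 1 \<noteq> 0" using rp by auto
  have G: "\<exists>C s \<eta> \<epsilon> \<phi>. C \<noteq> 0 \<and> s \<in> {1, -1} \<and> \<eta> \<in> {1, -1} \<and> \<epsilon> \<in> {1, -1} \<and>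
            (\<forall>u\<in>I. Rfun r C s u > 0 \<and>
               (\<phi> has_real_derivative
                  \<eta> * sqrt (Rfun r C s u) / (r u * ((deriv r u)^2 - 1))) (at u)) \<and>
            ((\<forall>u\<in>I. (deriv r u)^2 > 1 \<and>
                deriv x2 u = sqrt ((deriv r u)^2 - 1) * sinh (\<phi> u) \<and>
                deriv x4 u = \<epsilon> * (sqrt ((deriv r u)^2 - 1) * cosh (\<phi> u)))
             \<or>
             (\<forall>u\<in>I. (deriv r u)^2 < 1 \<and>
                deriv x2 u = \<epsilon> * (sqrt (1 - (deriv r u)^2) * cosh (\<phi> u)) \<and>
                deriv x4 u = sqrt (1 - (deriv r u)^2) * sinh (\<phi> u)))"
    using sign_const[OF iI Acont Anz]
  proof
    assume "\<forall>u\<in>I. (deriv r u)^2 - 1 > 0"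
    then have pA: "\<forall>u\<in>I. (deriv r u)^2 > 1" by simp
    obtain C s \<eta> \<epsilon> \<phi> where X: "C \<noteq> 0" "s \<in> {1,-1}" "\<eta> \<in> {1,-1}" "\<epsilon> \<in> {1,-1}"
     "\<forall>u\<in>I. Rfun r C s u > 0 \<and>
        (\<phi> has_real_derivative \<eta> * sqrt (Rfun r C s u) / (r u * ((deriv r u)^2 - 1))) (at u)"
     "\<forall>u\<in>I. (deriv r u)^2 > 1 \<and>
        deriv x2 u = sqrt ((deriv r u)^2 - 1) * sinh (\<phi> u) \<and>
        deriv x4 u = \<epsilon> * (sqrt ((deriv r u)^2 - 1) * cosh (\<phi> u))"
      using caseA_conv[OF oI iI IJ smr smx2 smx4 rp arc pA Wnz c0 Hc] by blast
    show ?thesis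
      apply (rule exI[of _ C], rule exI[of _ s], rule exI[of _ \<eta>], rule exI[of _ \<epsilon>], rule exI[of _ \<phi>])
      using X by blast
  next
    assume "\<forall>u\<in>I. (deriv r u)^2 - 1 < 0"
    then have pB: "\<forall>u\<in>I. (deriv r u)^2 < 1" by simp
    obtain C s \<eta> \<epsilon> \<phi> where X: "C \<noteq> 0" "s \<in> {1,-1}" "\<eta> \<in> {1,-1}" "\<epsilon> \<in> {1,-1}"
     "\<forall>u\<in>I. Rfun r C s u > 0 \<and>
        (\<phi> has_real_derivative \<eta> * sqrt (Rfun r C s u) / (r u * ((deriv r u)^2 - 1))) (at u)"
     "\<forall>u\<in>I. (deriv r u)^2 < 1 \<and>
        deriv x2 u = \<epsilon> * (sqrt (1 - (deriv r u)^2) * cosh (\<phi> u)) \<and>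
        deriv x4 u = sqrt (1 - (deriv r u)^2) * sinh (\<phi> u)"
      using caseB_conv[OF oI iI IJ smr smx2 smx4 rp arc pB Wnz c0 Hc] by blast
    show ?thesis
      apply (rule exI[of _ C], rule exI[of _ s], rule exI[of _ \<eta>], rule exI[of _ \<epsilon>], rule exI[of _ \<phi>])
      using X by blast
  qed
  show "\<forall>u0\<in>I. \<exists>I0. open I0 \<and> is_interval I0 \<and> u0 \<in> I0 \<and> I0 \<subseteq> I \<and>
         (\<exists>C s \<eta> \<epsilon> \<phi>. C \<noteq> 0 \<and> s \<in> {1, -1} \<and> \<eta> \<in> {1, -1} \<and> \<epsilon> \<in> {1, -1} \<and>
            (\<forall>u\<in>I0. Rfun r C s u > 0 \<and>
               (\<phi> has_real_derivative
                  \<eta> * sqrt (Rfun r C s u) / (r u * ((deriv r u)^2 - 1))) (at u)) \<and>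
            ((\<forall>u\<in>I0. (deriv r u)^2 > 1 \<and>
                deriv x2 u = sqrt ((deriv r u)^2 - 1) * sinh (\<phi> u) \<and>
                deriv x4 u = \<epsilon> * (sqrt ((deriv r u)^2 - 1) * cosh (\<phi> u)))
             \<or>
             (\<forall>u\<in>I0. (deriv r u)^2 < 1 \<and>
                deriv x2 u = \<epsilon> * (sqrt (1 - (deriv r u)^2) * cosh (\<phi> u)) \<and>
                deriv x4 u = sqrt (1 - (deriv r u)^2) * sinh (\<phi> u))))"
  proof
    fix u0 assume u0: "u0 \<in> I"
    show "\<exists>I0. open I0 \<and> is_interval I0 \<and> u0 \<in> I0 \<and> I0 \<subseteq> I \<and>
         (\<exists>C s \<eta> \<epsilon> \<phi>. C \<noteq> 0 \<and> s \<in> {1, -1} \<and> \<eta> \<in> {1, -1} \<and> \<epsilon> \<in> {1, -1} \<and>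
            (\<forall>u\<in>I0. Rfun r C s u > 0 \<and>
               (\<phi> has_real_derivative
                  \<eta> * sqrt (Rfun r C s u) / (r u * ((deriv r u)^2 - 1))) (at u)) \<and>
            ((\<forall>u\<in>I0. (deriv r u)^2 > 1 \<and>
                deriv x2 u = sqrt ((deriv r u)^2 - 1) * sinh (\<phi> u) \<and>
                deriv x4 u = \<epsilon> * (sqrt ((deriv r u)^2 - 1) * cosh (\<phi> u)))
             \<or>
             (\<forall>u\<in>I0. (deriv r u)^2 < 1 \<and>
                deriv x2 u = \<epsilon> * (sqrt (1 - (deriv r u)^2) * cosh (\<phi> u)) \<and>
                deriv x4 u = sqrt (1 - (deriv r u)^2) * sinh (\<phi> u))))"
      apply (rule exI[of _ I])
      using oI iI u0 G by blast
  qed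
qed


lemma part1:
  "(\<forall>(I::real set) r C s \<eta> \<phi> x2 x4.
      open I \<and> is_interval I \<and> I \<noteq> {} \<and>
      smooth_real_on I r \<and> (\<forall>u\<in>I. r u > 0 \<and> (deriv r u)^2 \<noteq> 1) \<and>
      C \<noteq> 0 \<and> s \<in> {1, -1} \<and> \<eta> \<in> {1, -1} \<and>
      (\<forall>u\<in>I. Rfun r C s u > 0) \<and>
      (\<forall>u\<in>I. (\<phi> has_real_derivative
                 \<eta> * sqrt (Rfun r C s u) / (r u * ((deriv r u)^2 - 1))) (at u)) \<and>
      ((\<forall>u\<in>I. (deriv r u)^2 > 1 \<and>
          (x2 has_real_derivative sqrt ((deriv r u)^2 - 1) * sinh (\<phi> u)) (at u) \<and>
          (x4 has_real_derivative sqrt ((deriv r u)^2 - 1) * cosh (\<phi> u)) (at u))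
       \<or>
       (\<forall>u\<in>I. (deriv r u)^2 < 1 \<and>
          (x2 has_real_derivative sqrt (1 - (deriv r u)^2) * cosh (\<phi> u)) (at u) \<and>
          (x4 has_real_derivative sqrt (1 - (deriv r u)^2) * sinh (\<phi> u)) (at u)))
    \<longrightarrow>
      (\<forall>u\<in>I.
         spacelike (vector_derivative (gen_curve r x2 x4) (at u)) \<and>
         ip42 (vector_derivative (gen_curve r x2 x4) (at u))
              (vector_derivative (gen_curve r x2 x4) (at u)) = 1 \<and>
         deriv x2 u * deriv (deriv x4) u - deriv (deriv x2) u * deriv x4 u \<noteq> 0 \<and>
         (\<forall>v. lorentz_at (rot_hyp r x2 x4) u v \<and>
              ip42 (mean_curv (rot_hyp r x2 x4) u v) (mean_curv (rot_hyp r x2 x4) u v)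
                = s * C^2)))"
proof (intro allI impI)
  fix I :: "real set" and r C s \<eta> \<phi> x2 x4
  assume H: "open I \<and> is_interval I \<and> I \<noteq> {} \<and>
      smooth_real_on I r \<and> (\<forall>u\<in>I. r u > 0 \<and> (deriv r u)^2 \<noteq> 1) \<and>
      C \<noteq> 0 \<and> s \<in> {1, -1} \<and> \<eta> \<in> {1, -1} \<and>
      (\<forall>u\<in>I. Rfun r C s u > 0) \<and>
      (\<forall>u\<in>I. (\<phi> has_real_derivative
                 \<eta> * sqrt (Rfun r C s u) / (r u * ((deriv r u)^2 - 1))) (at u)) \<and>
      ((\<forall>u\<in>I. (deriv r u)^2 > 1 \<and>
          (x2 has_real_derivative sqrt ((deriv r u)^2 - 1) * sinh (\<phi> u)) (at u) \<and>
          (x4 has_real_derivative sqrt ((deriv r u)^2 - 1) * cosh (\<phi> u)) (at u))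
       \<or>
       (\<forall>u\<in>I. (deriv r u)^2 < 1 \<and>
          (x2 has_real_derivative sqrt (1 - (deriv r u)^2) * cosh (\<phi> u)) (at u) \<and>
          (x4 has_real_derivative sqrt (1 - (deriv r u)^2) * sinh (\<phi> u)) (at u)))"
  have oI: "open I"
    using H by (elim conjE) assumption
  have sm: "smooth_real_on I r"
    using H by (elim conjE) assumption
  have rp: "\<forall>u\<in>I. r u > 0 \<and> (deriv r u)^2 \<noteq> 1"
    using H by (elim conjE) assumption
  have eta: "\<eta> \<in> {1, -1}"
    using H by (elim conjE) assumption
  have Rp: "\<forall>u\<in>I. Rfun r C s u > 0"
    using H by (elim conjE) assumption
  have dphi: "\<forall>u\<in>I. (\<phi> has_real_derivative
                 \<eta> * sqrt (Rfun r C s u) / (r u * ((deriv r u)^2 - 1))) (at u)"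
    using H by (elim conjE) assumption
  have cases: "(\<forall>u\<in>I. (deriv r u)^2 > 1 \<and>
          (x2 has_real_derivative sqrt ((deriv r u)^2 - 1) * sinh (\<phi> u)) (at u) \<and>
          (x4 has_real_derivative sqrt ((deriv r u)^2 - 1) * cosh (\<phi> u)) (at u))
       \<or>
       (\<forall>u\<in>I. (deriv r u)^2 < 1 \<and>
          (x2 has_real_derivative sqrt (1 - (deriv r u)^2) * cosh (\<phi> u)) (at u) \<and>
          (x4 has_real_derivative sqrt (1 - (deriv r u)^2) * sinh (\<phi> u)) (at u))"
    using H by (elim conjE) assumption
  define \<phi>d where "\<phi>d = (\<lambda>t. \<eta> * sqrt (Rfun r C s t) / (r t * ((deriv r t)^2 - 1)))"
  have dphi': "\<forall>t\<in>I. (\<phi> has_real_derivative \<phi>d t) (at t)" using dphi unfolding \<phi>d_def by blast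
  have e1: "(1::real)^2 = 1" by simp
  show "\<forall>u\<in>I.
         spacelike (vector_derivative (gen_curve r x2 x4) (at u)) \<and>
         ip42 (vector_derivative (gen_curve r x2 x4) (at u))
              (vector_derivative (gen_curve r x2 x4) (at u)) = 1 \<and>
         deriv x2 u * deriv (deriv x4) u - deriv (deriv x2) u * deriv x4 u \<noteq> 0 \<and>
         (\<forall>v. lorentz_at (rot_hyp r x2 x4) u v \<and>
              ip42 (mean_curv (rot_hyp r x2 x4) u v) (mean_curv (rot_hyp r x2 x4) u v)
                = s * C^2)"
  proof
    fix u assume u: "u \<in> I"
    have core: "ip42 (vector_derivative (gen_curve r x2 x4) (at u)) (vector_derivative (gen_curve r x2 x4) (at u)) = 1 \<and>
   deriv x2 u * deriv (deriv x4) u - deriv (deriv x2) u * deriv x4 u = - 1 * ((deriv r u)^2 - 1) * \<phi>d u \<and>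
   (\<forall>v. lorentz_at (rot_hyp r x2 x4) u v \<and>
      ip42 (mean_curv (rot_hyp r x2 x4) u v) (mean_curv (rot_hyp r x2 x4) u v)
       = ((r u)^2 * ((deriv r u)^2 - 1)^2 * (\<phi>d u)^2 - (r u * deriv (deriv r) u + ((deriv r u)^2 - 1))^2)
         / (4 * (r u)^2 * ((deriv r u)^2 - 1)))"
      using cases
    proof
      assume A: "\<forall>u\<in>I. (deriv r u)^2 > 1 \<and>
          (x2 has_real_derivative sqrt ((deriv r u)^2 - 1) * sinh (\<phi> u)) (at u) \<and>
          (x4 has_real_derivative sqrt ((deriv r u)^2 - 1) * cosh (\<phi> u)) (at u)"
      show ?thesis
      proof (rule coreA[OF oI u sm _ _ dphi' e1])
        show "0 < r u" using rp u by blast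
        show "\<forall>s\<in>I. 1 < (deriv r s)\<^sup>2" using A by blast
        show "\<forall>s\<in>I. (x2 has_real_derivative sqrt ((deriv r s)\<^sup>2 - 1) * sinh (\<phi> s)) (at s)" using A by blast
        show "\<forall>s\<in>I. (x4 has_real_derivative 1 * (sqrt ((deriv r s)\<^sup>2 - 1) * cosh (\<phi> s))) (at s)" using A by simp
      qed
    next
      assume B: "\<forall>u\<in>I. (deriv r u)^2 < 1 \<and>
          (x2 has_real_derivative sqrt (1 - (deriv r u)^2) * cosh (\<phi> u)) (at u) \<and>
          (x4 has_real_derivative sqrt (1 - (deriv r u)^2) * sinh (\<phi> u)) (at u)"
      show ?thesis
      proof (rule coreB[OF oI u sm _ _ dphi' e1])
        show "0 < r u" using rp u by blast
        show "\<forall>s\<in>I. (deriv r s)\<^sup>2 < 1" using B by blast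
        show "\<forall>s\<in>I. (x2 has_real_derivative 1 * (sqrt (1 - (deriv r s)\<^sup>2) * cosh (\<phi> s))) (at s)" using B by simp
        show "\<forall>s\<in>I. (x4 has_real_derivative sqrt (1 - (deriv r s)\<^sup>2) * sinh (\<phi> s)) (at s)" using B by blast
      qed
    qed
    have Rdef: "Rfun r C s u = (r u * deriv (deriv r) u + (deriv r u)^2 - 1)^2 + s*4*C^2*(r u)^2*((deriv r u)^2-1)"
      by (simp add: Rfun_def)
    note F = fwd_alg[OF _ _ eta _ Rdef]
    have ru: "r u > 0" "(deriv r u)^2 \<noteq> 1" "Rfun r C s u > 0" using rp Rp u by auto
    have F1: "((r u)^2 * ((deriv r u)^2 - 1)^2 * (\<phi>d u)^2 - (r u * deriv (deriv r) u + ((deriv r u)^2 - 1))^2)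
         / (4 * (r u)^2 * ((deriv r u)^2 - 1)) = s * C^2"
      unfolding \<phi>d_def using F(1)[OF ru] .
    have F2: "- 1 * ((deriv r u)^2 - 1) * \<phi>d u \<noteq> 0"
      unfolding \<phi>d_def using F(2)[OF ru] .
    show "spacelike (vector_derivative (gen_curve r x2 x4) (at u)) \<and>
         ip42 (vector_derivative (gen_curve r x2 x4) (at u))
              (vector_derivative (gen_curve r x2 x4) (at u)) = 1 \<and>
         deriv x2 u * deriv (deriv x4) u - deriv (deriv x2) u * deriv x4 u \<noteq> 0 \<and>
         (\<forall>v. lorentz_at (rot_hyp r x2 x4) u v \<and>
              ip42 (mean_curv (rot_hyp r x2 x4) u v) (mean_curv (rot_hyp r x2 x4) u v)
                = s * C^2)"
      using core F1 F2 unfolding spacelike_def by auto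
  qed
qed

theorem theorem3p2:
  shows
  "(\<forall>(I::real set) r C s \<eta> \<phi> x2 x4.
      open I \<and> is_interval I \<and> I \<noteq> {} \<and>
      smooth_real_on I r \<and> (\<forall>u\<in>I. r u > 0 \<and> (deriv r u)^2 \<noteq> 1) \<and>
      C \<noteq> 0 \<and> s \<in> {1, -1} \<and> \<eta> \<in> {1, -1} \<and>
      (\<forall>u\<in>I. Rfun r C s u > 0) \<and>
      (\<forall>u\<in>I. (\<phi> has_real_derivative
                 \<eta> * sqrt (Rfun r C s u) / (r u * ((deriv r u)^2 - 1))) (at u)) \<and>
      ((\<forall>u\<in>I. (deriv r u)^2 > 1 \<and>
          (x2 has_real_derivative sqrt ((deriv r u)^2 - 1) * sinh (\<phi> u)) (at u) \<and>
          (x4 has_real_derivative sqrt ((deriv r u)^2 - 1) * cosh (\<phi> u)) (at u))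
       \<or>
       (\<forall>u\<in>I. (deriv r u)^2 < 1 \<and>
          (x2 has_real_derivative sqrt (1 - (deriv r u)^2) * cosh (\<phi> u)) (at u) \<and>
          (x4 has_real_derivative sqrt (1 - (deriv r u)^2) * sinh (\<phi> u)) (at u)))
    \<longrightarrow>
      (\<forall>u\<in>I.
         spacelike (vector_derivative (gen_curve r x2 x4) (at u)) \<and>
         ip42 (vector_derivative (gen_curve r x2 x4) (at u))
              (vector_derivative (gen_curve r x2 x4) (at u)) = 1 \<and>
         deriv x2 u * deriv (deriv x4) u - deriv (deriv x2) u * deriv x4 u \<noteq> 0 \<and>
         (\<forall>v. lorentz_at (rot_hyp r x2 x4) u v \<and>
              ip42 (mean_curv (rot_hyp r x2 x4) u v) (mean_curv (rot_hyp r x2 x4) u v)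
                = s * C^2)))
   \<and>
   (\<forall>(J::real set) (I::real set) r x2 x4 c.
      open J \<and> is_interval J \<and> open I \<and> is_interval I \<and> I \<noteq> {} \<and> I \<subseteq> J \<and>
      smooth_real_on J r \<and> smooth_real_on J x2 \<and> smooth_real_on J x4 \<and>
      (\<forall>u\<in>J. r u > 0 \<and> (deriv r u)^2 \<noteq> 1 \<and>
               spacelike (vector_derivative (gen_curve r x2 x4) (at u)) \<and>
               (deriv r u)^2 + (deriv x2 u)^2 - (deriv x4 u)^2 = 1) \<and>
      (\<forall>u\<in>I. deriv x2 u * deriv (deriv x4) u - deriv (deriv x2) u * deriv x4 u \<noteq> 0) \<and>
      c \<noteq> 0 \<and>
      (\<forall>u\<in>I. \<forall>v. ip42 (mean_curv (rot_hyp r x2 x4) u v) (mean_curv (rot_hyp r x2 x4) u v) = c)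
    \<longrightarrow>
      (\<forall>u0\<in>I. \<exists>I0. open I0 \<and> is_interval I0 \<and> u0 \<in> I0 \<and> I0 \<subseteq> I \<and>
         (\<exists>C s \<eta> \<epsilon> \<phi>. C \<noteq> 0 \<and> s \<in> {1, -1} \<and> \<eta> \<in> {1, -1} \<and> \<epsilon> \<in> {1, -1} \<and>
            (\<forall>u\<in>I0. Rfun r C s u > 0 \<and>
               (\<phi> has_real_derivative
                  \<eta> * sqrt (Rfun r C s u) / (r u * ((deriv r u)^2 - 1))) (at u)) \<and>
            ((\<forall>u\<in>I0. (deriv r u)^2 > 1 \<and>
                deriv x2 u = sqrt ((deriv r u)^2 - 1) * sinh (\<phi> u) \<and>
                deriv x4 u = \<epsilon> * (sqrt ((deriv r u)^2 - 1) * cosh (\<phi> u)))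
             \<or>
             (\<forall>u\<in>I0. (deriv r u)^2 < 1 \<and>
                deriv x2 u = \<epsilon> * (sqrt (1 - (deriv r u)^2) * cosh (\<phi> u)) \<and>
                deriv x4 u = sqrt (1 - (deriv r u)^2) * sinh (\<phi> u))))))"
  using part1 part2 by (rule conjI)

end
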